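(* Let $q_0\equiv 0$ (free operator $\mathcal A_0$). Every $\lambda\in\mathbb R$ satisfying $$\Big[1-\rho^2\frac{\lambda}{a}\Big]\frac{\sin\sqrt{\lambda/a}}{\sqrt{\lambda/a}}+2\rho\cos\sqrt{\lambda/a}=0$$ is an eigenvalue of infinite multiplicity of $\mathcal A_0$, and the corresponding eigenspace is the closed linear span of simple loop states (eigenfunctions supported on the six edges of a single hexagon, with all vertex values $\omega_v=0$).
   Context: Fix $a>0$, $\kappa^{-1}\ge0$, $m\ge0$, $\rho:=a\kappa^{-1}$. $\cos\sqrt{\lambda/a}$ and $\frac{\sin\sqrt{\lambda/a}}{\sqrt{\lambda/a}}$ denote the entire functions $\sum_k(-\lambda/a)^k/(2k)!$ and $\sum_k(-\lambda/a)^k/(2k+1)!$ of $\lambda$. $G$: hexagonal lattice with edges of length 1 identified with $[0,1]$; a hexagon is a 6-cycle bounding a face. $\partial_nu_e(v)$: outward derivative ($-u_e'(0)$ at $x=0$, $u_e'(1)$ at $x=1$). $\mathcal A_0$: if $m>0$, the operator on $L^2(G)\oplus\ell^2(\mathcal V)$ (inner product $\sum_e\int u_e\bar w_e+m\sum_v\omega_v\bar\eta_v$) with domain $(u,\omega)$, $u_e\in H^2(0,1)$, $\sum_e\|u_e\|_{H^2}^2<\infty$, $\omega\in\ell^2$, $u_e(v)+\rho\partial_nu_e(v)=\omega_v$ for all $v$, $e\ni v$, acting as $(u,\omega)\mapsto((-au_e'')_e,(m^{-1}a\sum_{e\ni v}\partial_nu_e(v))_v)$; if $m=0$, the operator $u\mapsto(-au_e'')_e$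 on $L^2(G)$ with domain requiring $u_e(v)+\rho\partial_nu_e(v)$ independent of $e\ni v$ and $\sum_{e\ni v}\partial_nu_e(v)=0$. *)

theory Defs
  imports "HOL-Analysis.Analysis"
begin

text \<open>Vertices: (i,j,False) is the A-vertex of cell (i,j), (i,j,True) the B-vertex.
  Edge (i,j,d) joins the A-vertex (i,j) (identified with x=0) to the B-vertex
  (i,j) for d=D0, (i-1,j) for d=D1, (i,j-1) for d=D2 (identified with x=1).\<close>

datatype dir = D0 | D1 | D2

type_synonym vertex = "int \<times> int \<times> bool"
type_synonym edge = "int \<times> int \<times> dir"

definition tailv :: "edge \<Rightarrow> vertex" where
  "tailv e = (case e of (i, j, d) \<Rightarrow> (i, j, False))"

definition headv :: "edge \<Rightarrow> vertex" where
  "headv e = (case e of (i, j, d) \<Rightarrow>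
     (case d of D0 \<Rightarrow> (i, j, True) | D1 \<Rightarrow> (i - 1, j, True) | D2 \<Rightarrow> (i, j - 1, True)))"

definition incident :: "vertex \<Rightarrow> edge set" where
  "incident v = {e. tailv e = v \<or> headv e = v}"

text \<open>The hexagonal face with label (i,j): the 6-cycle
  A(i,j) - B(i,j) - A(i,j+1) - B(i-1,j+1) - A(i-1,j+1) - B(i-1,j) - A(i,j).
  Every face of the lattice is of this form for exactly one (i,j).\<close>

definition hexagon :: "int \<times> int \<Rightarrow> edge set" where
  "hexagon h = (case h of (i, j) \<Rightarrow>
     {(i, j, D0), (i, j, D1), (i, j + 1, D2), (i, j + 1, D1),
      (i - 1, j + 1, D0), (i - 1, j + 1, D2)})"

text \<open>A state is a pair (u, \<omega>): u e is the function on edge e (parametrised by [0,1];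
  values outside [0,1] are irrelevant), \<omega> v the vertex value.\<close>

type_synonym state = "(edge \<Rightarrow> real \<Rightarrow> complex) \<times> (vertex \<Rightarrow> complex)"

definition sq_int :: "(real \<Rightarrow> complex) \<Rightarrow> bool" where
  "sq_int f \<longleftrightarrow> f absolutely_integrable_on {0..1} \<and> (\<lambda>t. (cmod (f t))\<^sup>2) integrable_on {0..1}"

definition deriv01 :: "(real \<Rightarrow> complex) \<Rightarrow> real \<Rightarrow> complex" where
  "deriv01 f t = vector_derivative f (at t within {0..1})"

text \<open>f \<in> H^2(0,1) with (weak) second derivative g: f is C^1 on [0,1], f' is the
  integral of g, and g is square integrable.\<close>

definition H2_rep :: "(real \<Rightarrow> complex) \<Rightarrow> (real \<Rightarrow> complex) \<Rightarrow> bool" where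
  "H2_rep f g \<longleftrightarrow>
     (\<forall>t\<in>{0..1}. (f has_vector_derivative deriv01 f t) (at t within {0..1})) \<and>
     sq_int g \<and>
     (\<forall>t\<in>{0..1}. deriv01 f t = deriv01 f 0 + integral {0..t} g)"

definition H2_normsq :: "(real \<Rightarrow> complex) \<Rightarrow> (real \<Rightarrow> complex) \<Rightarrow> real" where
  "H2_normsq f g = integral {0..1} (\<lambda>t. (cmod (f t))\<^sup>2 + (cmod (deriv01 f t))\<^sup>2 + (cmod (g t))\<^sup>2)"

definition vval :: "(edge \<Rightarrow> real \<Rightarrow> complex) \<Rightarrow> edge \<Rightarrow> vertex \<Rightarrow> complex" where
  "vval u e v = (if v = tailv e then u e 0 else u e 1)"

text \<open>Outward normal derivative at the endpoint v of e.\<close>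
definition dnorm :: "(edge \<Rightarrow> real \<Rightarrow> complex) \<Rightarrow> edge \<Rightarrow> vertex \<Rightarrow> complex" where
  "dnorm u e v = (if v = tailv e then - deriv01 (u e) 0 else deriv01 (u e) 1)"

definition in_H :: "state \<Rightarrow> bool" where
  "in_H x \<longleftrightarrow> (\<forall>e. sq_int (fst x e)) \<and>
     (\<lambda>e. integral {0..1} (\<lambda>t. (cmod (fst x e t))\<^sup>2)) summable_on UNIV \<and>
     (\<lambda>v. (cmod (snd x v))\<^sup>2) summable_on UNIV"

definition hnormsq :: "real \<Rightarrow> state \<Rightarrow> real" where
  "hnormsq m x = (\<Sum>\<^sub>\<infinity>e. integral {0..1} (\<lambda>t. (cmod (fst x e t))\<^sup>2))
                + m * (\<Sum>\<^sub>\<infinity>v. (cmod (snd x v))\<^sup>2)"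

definition sdiff :: "state \<Rightarrow> state \<Rightarrow> state" where
  "sdiff x y = ((\<lambda>e t. fst x e t - fst y e t), (\<lambda>v. snd x v - snd y v))"

definition lincomb :: "state set \<Rightarrow> (state \<Rightarrow> complex) \<Rightarrow> state" where
  "lincomb F c = ((\<lambda>e t. \<Sum>f\<in>F. c f * fst f e t), (\<lambda>v. \<Sum>f\<in>F. c f * snd f v))"

definition in_cspan :: "real \<Rightarrow> state set \<Rightarrow> state \<Rightarrow> bool" where
  "in_cspan m S x \<longleftrightarrow> (\<forall>\<epsilon>>0. \<exists>F c. finite F \<and> F \<subseteq> S \<and> hnormsq m (sdiff x (lincomb F c)) < \<epsilon>)"

text \<open>Domain of A_0 with witness g for the second derivatives u_e''.
  For m>0: u_e(v) + \<rho> \<partial>_n u_e(v) = \<omega>_v.  For m=0 the vertex component \<omega>_v is just the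
  common value of u_e(v) + \<rho> \<partial>_n u_e(v), and the Kirchhoff condition is imposed.\<close>
definition A0_dom_wit :: "real \<Rightarrow> real \<Rightarrow> real \<Rightarrow> state \<Rightarrow> (edge \<Rightarrow> real \<Rightarrow> complex) \<Rightarrow> bool" where
  "A0_dom_wit a kinv m x g \<longleftrightarrow>
     (\<forall>e. H2_rep (fst x e) (g e)) \<and>
     (\<lambda>e. H2_normsq (fst x e) (g e)) summable_on UNIV \<and>
     (\<lambda>v. (cmod (snd x v))\<^sup>2) summable_on UNIV \<and>
     (\<forall>v. \<forall>e\<in>incident v. vval (fst x) e v + of_real (a * kinv) * dnorm (fst x) e v = snd x v) \<and>
     (m = 0 \<longrightarrow> (\<forall>v. (\<Sum>e\<in>incident v. dnorm (fst x) e v) = 0))"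

text \<open>Eigenvectors of A_0 for the eigenvalue \<lambda> (the zero vector included):
  x \<in> dom A_0 and A_0 x = \<lambda> x.\<close>
definition A0_eig :: "real \<Rightarrow> real \<Rightarrow> real \<Rightarrow> real \<Rightarrow> state set" where
  "A0_eig a kinv m lam = {x. \<exists>g. A0_dom_wit a kinv m x g \<and>
     (\<forall>e. AE t in lebesgue. t \<in> {0..1} \<longrightarrow> - of_real a * g e t = of_real lam * fst x e t) \<and>
     (m > 0 \<longrightarrow> (\<forall>v. of_real (a / m) * (\<Sum>e\<in>incident v. dnorm (fst x) e v) = of_real lam * snd x v))}"

text \<open>Eigenvalue of infinite multiplicity: the eigenspace is not finite dimensional
  (no finite set of eigenvectors spans it, up to Hilbert-space null vectors).\<close>
definition inf_mult_eigenvalue :: "real \<Rightarrow> real \<Rightarrow> real \<Rightarrow> real \<Rightarrow> bool" where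
  "inf_mult_eigenvalue a kinv m lam \<longleftrightarrow>
     \<not> (\<exists>B. finite B \<and> B \<subseteq> A0_eig a kinv m lam \<and>
           (\<forall>x\<in>A0_eig a kinv m lam. \<exists>c. hnormsq m (sdiff x (lincomb B c)) = 0))"

definition loop_states :: "real \<Rightarrow> real \<Rightarrow> real \<Rightarrow> real \<Rightarrow> state set" where
  "loop_states a kinv m lam = {x \<in> A0_eig a kinv m lam. (\<forall>v. snd x v = 0) \<and>
     (\<exists>h. \<forall>e. e \<notin> hexagon h \<longrightarrow> (\<forall>t\<in>{0..1}. fst x e t = 0))}"

definition cosE :: "real \<Rightarrow> real" where
  "cosE z = (\<Sum>k. (- z) ^ k / fact (2 * k))"

definition sincE :: "real \<Rightarrow> real" where
  "sincE z = (\<Sum>k. (- z) ^ k / fact (2 * k + 1))"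

end

theory Submission
  imports Defs "HOL-Library.Function_Algebras"
begin

lemma sqrt_pow_even: "z \<ge> 0 \<Longrightarrow> sqrt z ^ (2 * n) = (z::real) ^ n"
  by (simp add: power_mult)

lemma cosE_pos: assumes "z > 0" shows "cosE z = cos (sqrt z)"
proof -
  have "(\<lambda>n. (- 1) ^ n / (fact (2 * n)) * (sqrt z) ^ (2 * n)) sums cos (sqrt z)"
    by (rule cos_paired)
  moreover have "(\<lambda>n. (- 1) ^ n / (fact (2 * n)) * (sqrt z) ^ (2 * n)) = (\<lambda>n. (- z) ^ n / fact (2 * n))"
    using assms by (auto simp: sqrt_pow_even power_minus' intro!: ext)
  ultimately show ?thesis unfolding cosE_def by (simp add: sums_iff)
qed

lemma sincE_pos: assumes "z > 0" shows "sincE z = sin (sqrt z) / sqrt z"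
proof -
  have "(\<lambda>n. (- 1) ^ n / (fact (2 * n + 1)) * (sqrt z) ^ (2 * n + 1)) sums sin (sqrt z)"
    by (rule sin_paired)
  then have "(\<lambda>n. (- 1) ^ n / (fact (2 * n + 1)) * (sqrt z) ^ (2 * n + 1) / sqrt z) sums (sin (sqrt z) / sqrt z)"
    by (rule sums_divide)
  moreover have "(\<lambda>n. (- 1) ^ n / (fact (2 * n + 1)) * (sqrt z) ^ (2 * n + 1) / sqrt z) = (\<lambda>n. (- z) ^ n / fact (2 * n + 1))"
  proof
    fix n
    have "(sqrt z) ^ (2 * n + 1) / sqrt z = sqrt z ^ (2 * n)" using assms by simp
    also have "\<dots> = z ^ n" using assms by (simp add: sqrt_pow_even)
    finally have e: "(sqrt z) ^ (2 * n + 1) / sqrt z = z ^ n" .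
    have "(- 1) ^ n / (fact (2 * n + 1)) * (sqrt z) ^ (2 * n + 1) / sqrt z = (- 1) ^ n / (fact (2 * n + 1)) * ((sqrt z) ^ (2 * n + 1) / sqrt z)"
      by simp
    with e show "(- 1) ^ n / (fact (2 * n + 1)) * (sqrt z) ^ (2 * n + 1) / sqrt z = (- z) ^ n / fact (2 * n + 1)"
      by (simp add: power_minus')
  qed
  ultimately show ?thesis unfolding sincE_def by (simp add: sums_iff)
qed

lemma series_ge1:
  fixes z :: real and d :: nat
  assumes "z \<le> 0" "d \<le> 1"
  shows "(\<Sum>k. (- z) ^ k / fact (2 * k + d)) \<ge> 1"
proof -
  have nn: "\<And>k. 0 \<le> (- z) ^ k / fact (2 * k + d)" using assms by simp
  have "summable (\<lambda>k. (- z) ^ k /\<^sub>R fact k)" by (rule summable_exp_generic)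
  then have s0: "summable (\<lambda>k. (- z) ^ k / fact k)" by (simp add: divide_inverse_commute)
  have "summable (\<lambda>k. (- z) ^ k / fact (2 * k + d))"
  proof (rule summable_comparison_test'[OF s0])
    fix n :: nat assume "n \<ge> 0"
    have "fact n \<le> (fact (2 * n + d) :: real)" by (rule fact_mono) auto
    moreover have "(fact n :: real) > 0" by simp
    moreover have "0 \<le> (- z) ^ n" using assms by simp
    ultimately show "norm ((- z) ^ n / fact (2 * n + d)) \<le> (- z) ^ n / fact n"
      by (simp only: real_norm_def abs_of_nonneg[OF nn]) (rule divide_left_mono, auto)
  qed
  then have "sum (\<lambda>k. (- z) ^ k / fact (2 * k + d)) {..<1} \<le> (\<Sum>k. (- z) ^ k / fact (2 * k + d))"
    using nn by (intro sum_le_suminf) auto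
  moreover have "fact d = (1::real)" using assms(2) by (cases d) auto
  ultimately show ?thesis by simp
qed

lemma lam_pos:
  fixes a kinv lam :: real
  assumes "a > 0" and "kinv \<ge> 0"
    and "(1 - (a * kinv)\<^sup>2 * (lam / a)) * sincE (lam / a) + 2 * (a * kinv) * cosE (lam / a) = 0"
  shows "lam > 0"
proof (rule ccontr)
  assume "\<not> lam > 0"
  then have z: "lam / a \<le> 0" using assms(1) by (simp add: divide_nonpos_pos)
  have "sincE (lam / a) \<ge> 1" using series_ge1[OF z, of 1] unfolding sincE_def by simp
  moreover have "cosE (lam / a) \<ge> 1" using series_ge1[OF z, of 0] unfolding cosE_def by simp
  moreover have "1 - (a * kinv)\<^sup>2 * (lam / a) \<ge> 1" using z mult_nonneg_nonpos[of "(a * kinv)\<^sup>2" "lam / a"] by simp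
  moreover have "a * kinv \<ge> 0" using assms by simp
  ultimately have "(1 - (a * kinv)\<^sup>2 * (lam / a)) * sincE (lam / a) + 2 * (a * kinv) * cosE (lam / a) \<ge> 1"
    by (smt (verit) mult_le_cancel_right1 mult_nonneg_nonneg)
  with assms(3) show False by simp
qed

definition hp :: "edge \<Rightarrow> int \<times> int" where
  "hp e = (case e of (i, j, D0) \<Rightarrow> (i, j) | (i, j, D1) \<Rightarrow> (i, j - 1) | (i, j, D2) \<Rightarrow> (i + 1, j - 1))"
definition hm :: "edge \<Rightarrow> int \<times> int" where
  "hm e = (case e of (i, j, D0) \<Rightarrow> (i + 1, j - 1) | (i, j, D1) \<Rightarrow> (i, j) | (i, j, D2) \<Rightarrow> (i, j - 1))"
definition curl :: "(int \<times> int \<Rightarrow> complex) \<Rightarrow> edge \<Rightarrow> complex" where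
  "curl \<psi> e = \<psi> (hp e) - \<psi> (hm e)"
definition divfree :: "(edge \<Rightarrow> complex) \<Rightarrow> bool" where
  "divfree \<beta> \<longleftrightarrow> (\<forall>v. (\<Sum>e\<in>incident v. \<beta> e) = 0)"

lemma hp_simps[simp]: "hp (i, j, D0) = (i, j)" "hp (i, j, D1) = (i, j - 1)" "hp (i, j, D2) = (i + 1, j - 1)"
  by (simp_all add: hp_def)
lemma hm_simps[simp]: "hm (i, j, D0) = (i + 1, j - 1)" "hm (i, j, D1) = (i, j)" "hm (i, j, D2) = (i, j - 1)"
  by (simp_all add: hm_def)

lemma tailv_simp[simp]: "tailv (i, j, d) = (i, j, False)" by (simp add: tailv_def)
lemma headv_simps[simp]: "headv (i, j, D0) = (i, j, True)" "headv (i, j, D1) = (i - 1, j, True)"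
  "headv (i, j, D2) = (i, j - 1, True)" by (simp_all add: headv_def)

lemma incident_A: "incident (i, j, False) = {(i, j, D0), (i, j, D1), (i, j, D2)}"
proof (rule set_eqI)
  fix e :: edge
  obtain i' j' d where e: "e = (i', j', d)" by (cases e) auto
  show "e \<in> incident (i, j, False) \<longleftrightarrow> e \<in> {(i, j, D0), (i, j, D1), (i, j, D2)}"
    unfolding e incident_def by (cases d) auto
qed
lemma incident_B: "incident (i, j, True) = {(i, j, D0), (i + 1, j, D1), (i, j + 1, D2)}"
proof (rule set_eqI)
  fix e :: edge
  obtain i' j' d where e: "e = (i', j', d)" by (cases e) auto
  show "e \<in> incident (i, j, True) \<longleftrightarrow> e \<in> {(i, j, D0), (i + 1, j, D1), (i, j + 1, D2)}"
    unfolding e incident_def by (cases d) auto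
qed

lemma finite_incident: "finite (incident v)"
  by (cases v) (metis (full_types) finite.emptyI finite_insert incident_A incident_B)

lemma tail_incident_A: "e \<in> incident (i, j, False) \<Longrightarrow> tailv e = (i, j, False)"
  by (auto simp: incident_A)
lemma tail_incident_B: "e \<in> incident (i, j, True) \<Longrightarrow> tailv e \<noteq> (i, j, True)"
  by (cases e) auto

lemma sum_incident_A: "(\<Sum>e\<in>incident (i, j, False). f e) = f (i, j, D0) + f (i, j, D1) + f (i, j, D2)"
  by (simp add: incident_A add.assoc)
lemma sum_incident_B: "(\<Sum>e\<in>incident (i, j, True). f e) = f (i, j, D0) + f (i + 1, j, D1) + f (i, j + 1, D2)"
  by (simp add: incident_B add.assoc)

lemma divfree_iff: "divfree \<beta> \<longleftrightarrow> (\<forall>i j. \<beta> (i, j, D0) + \<beta> (i, j, D1) + \<beta> (i, j, D2) = 0 \<and>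
     \<beta> (i, j, D0) + \<beta> (i + 1, j, D1) + \<beta> (i, j + 1, D2) = 0)"
proof
  assume "divfree \<beta>"
  then show "\<forall>i j. \<beta> (i, j, D0) + \<beta> (i, j, D1) + \<beta> (i, j, D2) = 0 \<and>
     \<beta> (i, j, D0) + \<beta> (i + 1, j, D1) + \<beta> (i, j + 1, D2) = 0"
    unfolding divfree_def
  proof (intro allI)
    fix i j
    assume h: "\<forall>v. sum \<beta> (incident v) = 0"
    show "\<beta> (i, j, D0) + \<beta> (i, j, D1) + \<beta> (i, j, D2) = 0 \<and>
     \<beta> (i, j, D0) + \<beta> (i + 1, j, D1) + \<beta> (i, j + 1, D2) = 0"
      using h[rule_format, of "(i, j, False)"] h[rule_format, of "(i, j, True)"]
      by (simp only: sum_incident_A sum_incident_B)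
  qed
next
  assume h: "\<forall>i j. \<beta> (i, j, D0) + \<beta> (i, j, D1) + \<beta> (i, j, D2) = 0 \<and>
     \<beta> (i, j, D0) + \<beta> (i + 1, j, D1) + \<beta> (i, j + 1, D2) = 0"
  show "divfree \<beta>" unfolding divfree_def
  proof
    fix v :: vertex
    obtain i j b where v: "v = (i, j, b)" by (cases v) auto
    show "(\<Sum>e\<in>incident v. \<beta> e) = 0"
      using h unfolding v by (cases b) (simp_all only: sum_incident_A sum_incident_B)
  qed
qed

lemma divfree_curl: "divfree (curl \<psi>)"
  unfolding divfree_iff curl_def by simp

lemma hexagon_hp: "e \<in> hexagon (hp e)"
proof -
  obtain i j d where e: "e = (i, j, d)" by (cases e) auto
  show ?thesis unfolding e by (cases d) (simp_all add: hexagon_def)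
qed
lemma hexagon_hm: "e \<in> hexagon (hm e)"
proof -
  obtain i j d where e: "e = (i, j, d)" by (cases e) auto
  show ?thesis unfolding e by (cases d) (simp_all add: hexagon_def)
qed
lemma not_in_hexagon: "e \<notin> hexagon h \<Longrightarrow> hp e \<noteq> h \<and> hm e \<noteq> h"
  using hexagon_hp hexagon_hm by blast

definition isum :: "(int \<Rightarrow> complex) \<Rightarrow> int \<Rightarrow> complex" where
  "isum g n = (if n \<ge> 0 then \<Sum>k\<in>{0..<n}. g k else - (\<Sum>k\<in>{n..<0}. g k))"

lemma isum_step: "isum g (n + 1) = isum g n + g n"
proof (cases "n \<ge> 0")
  case True
  then have "{0..<n+1} = insert n {0..<n}" by auto
  with True show ?thesis by (simp add: isum_def)
next
  case False
  show ?thesis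
  proof (cases "n = -1")
    case True
    have "{-1..<0::int} = {-1}" by auto
    with True show ?thesis by (simp add: isum_def)
  next
    case F2: False
    with False have "{n..<0} = insert n {n+1..<0}" by auto
    with False F2 show ?thesis by (simp add: isum_def)
  qed
qed

lemma potential_exists:
  assumes "divfree \<beta>"
  shows "\<exists>P. \<forall>e. \<beta> e = curl P e"
proof -
  have dA: "\<And>i j. \<beta> (i, j, D0) + \<beta> (i, j, D1) + \<beta> (i, j, D2) = 0"
   and dB: "\<And>i j. \<beta> (i, j, D0) + \<beta> (i + 1, j, D1) + \<beta> (i, j + 1, D2) = 0"
    using assms unfolding divfree_iff by auto
  define P where "P = (\<lambda>(i, j). isum (\<lambda>k. \<beta> (k, j + 1, D2)) i - isum (\<lambda>k. \<beta> (0, k + 1, D1)) j)"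
  have e2: "\<And>i j. \<beta> (i, j, D2) = P (i + 1, j - 1) - P (i, j - 1)"
    by (simp add: P_def isum_step)
  have e1: "\<beta> (i, j, D1) = P (i, j - 1) - P (i, j)" for i j
  proof -
    define \<Delta> where "\<Delta> i = P (i, j - 1) - P (i, j) - \<beta> (i, j, D1)" for i
    have st: "\<Delta> (i + 1) = \<Delta> i" for i
    proof -
      have "P (i + 1, j - 1) - P (i, j - 1) = \<beta> (i, j, D2)" using e2[of i j] by simp
      moreover have "P (i + 1, j) - P (i, j) = \<beta> (i, j + 1, D2)" using e2[of i "j + 1"] by simp
      moreover have "\<beta> (i + 1, j, D1) + \<beta> (i, j + 1, D2) = \<beta> (i, j, D1) + \<beta> (i, j, D2)"
        using dA[of i j] dB[of i j] by (simp add: algebra_simps) (metis add_diff_cancel_left')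
      ultimately show ?thesis unfolding \<Delta>_def by (simp add: algebra_simps)
    qed
    have z: "\<Delta> 0 = 0"
    proof -
      have "isum (\<lambda>k. \<beta> (0, k + 1, D1)) j = isum (\<lambda>k. \<beta> (0, k + 1, D1)) (j - 1) + \<beta> (0, j, D1)"
        using isum_step[of "\<lambda>k. \<beta> (0, k + 1, D1)" "j - 1"] by simp
      then show ?thesis unfolding \<Delta>_def P_def by (simp add: isum_def)
    qed
    have "\<Delta> i = 0"
    proof (induct i rule: int_induct[where k = 0])
      case base then show ?case by (rule z)
    next
      case (step1 i) then show ?case using st[of i] by simp
    next
      case (step2 i) then show ?case using st[of "i - 1"] by simp
    qed
    then show ?thesis unfolding \<Delta>_def by simp
  qed
  have e0: "\<beta> (i, j, D0) = P (i, j) - P (i + 1, j - 1)" for i j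
    using dA[of i j] e1[of i j] e2[of i j] by (simp add: algebra_simps)
  have "\<forall>e. \<beta> e = curl P e"
  proof
    fix e show "\<beta> e = curl P e"
    proof -
      obtain i j d where e: "e = (i, j, d)" by (cases e) auto
      show ?thesis unfolding e curl_def by (cases d) (simp_all add: e0 e1 e2)
    qed
  qed
  then show ?thesis by blast
qed

definition clipR :: "real \<Rightarrow> real \<Rightarrow> real" where "clipR M r = max (- M) (min M r)"
definition clipC :: "real \<Rightarrow> complex \<Rightarrow> complex" where
  "clipC M z = Complex (clipR M (Re z)) (clipR M (Im z))"

lemma clipR_lip: "\<bar>clipR M a - clipR M b\<bar> \<le> \<bar>a - b\<bar>"
  unfolding clipR_def by linarith
lemma clipR_lip2: "\<bar>(a - clipR M a) - (b - clipR M b)\<bar> \<le> \<bar>a - b\<bar>"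
  unfolding clipR_def by linarith
lemma clipR_id: "\<bar>a\<bar> \<le> M \<Longrightarrow> clipR M a = a"
  unfolding clipR_def by linarith
lemma clipR_bd: "M \<ge> 0 \<Longrightarrow> \<bar>clipR M a\<bar> \<le> M"
  unfolding clipR_def by linarith

lemma sq_mono_abs: "\<bar>x::real\<bar> \<le> \<bar>y\<bar> \<Longrightarrow> x\<^sup>2 \<le> y\<^sup>2"
  by (metis abs_le_square_iff)

lemma clipC_lip: "cmod (clipC M z - clipC M w) \<le> cmod (z - w)"
proof -
  have "(cmod (clipC M z - clipC M w))\<^sup>2 = (clipR M (Re z) - clipR M (Re w))\<^sup>2 + (clipR M (Im z) - clipR M (Im w))\<^sup>2"
    by (simp add: cmod_power2 clipC_def)
  also have "\<dots> \<le> (Re z - Re w)\<^sup>2 + (Im z - Im w)\<^sup>2"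
    by (intro add_mono sq_mono_abs clipR_lip)
  also have "\<dots> = (cmod (z - w))\<^sup>2" by (simp add: cmod_power2)
  finally show ?thesis by (simp add: power_mono_iff)
qed

lemma clipC_lip2: "cmod ((z - clipC M z) - (w - clipC M w)) \<le> cmod (z - w)"
proof -
  have "(cmod ((z - clipC M z) - (w - clipC M w)))\<^sup>2 =
     ((Re z - clipR M (Re z)) - (Re w - clipR M (Re w)))\<^sup>2 + ((Im z - clipR M (Im z)) - (Im w - clipR M (Im w)))\<^sup>2"
    by (simp add: cmod_power2 clipC_def)
  also have "\<dots> \<le> (Re z - Re w)\<^sup>2 + (Im z - Im w)\<^sup>2"
    by (intro add_mono sq_mono_abs clipR_lip2)
  also have "\<dots> = (cmod (z - w))\<^sup>2" by (simp add: cmod_power2)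
  finally show ?thesis by (simp add: power_mono_iff)
qed

lemma clipC_id: "cmod z \<le> M \<Longrightarrow> clipC M z = z"
  unfolding clipC_def using abs_Re_le_cmod[of z] abs_Im_le_cmod[of z]
  by (simp add: clipR_id complex_eq_iff)

lemma clipC_bd: "M \<ge> 0 \<Longrightarrow> cmod (clipC M z) \<le> 2 * M"
proof -
  assume M: "M \<ge> 0"
  have "cmod (clipC M z) \<le> \<bar>Re (clipC M z)\<bar> + \<bar>Im (clipC M z)\<bar>" by (rule cmod_le)
  also have "\<dots> \<le> M + M" unfolding clipC_def using clipR_bd[OF M, of "Re z"] clipR_bd[OF M, of "Im z"] by simp
  finally show ?thesis by simp
qed

definition nrm :: "int \<times> int \<Rightarrow> nat" where "nrm p = nat (max \<bar>fst p\<bar> \<bar>snd p\<bar>)"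

lemma nrm_shift: "\<bar>a - a'\<bar> \<le> 1 \<Longrightarrow> \<bar>b - b'\<bar> \<le> 1 \<Longrightarrow> nrm (a, b) \<le> Suc (nrm (a', b'))"
  unfolding nrm_def by (simp add: nat_le_iff max_def split: if_splits) linarith?
lemma nrm_adj0: "nrm (hm e) \<le> nrm (hp e) + 1 \<and> nrm (hp e) \<le> nrm (hm e) + 1"
proof -
  obtain i j d where e: "e = (i, j, d)" by (cases e) auto
  show ?thesis unfolding e by (cases d) (auto intro!: nrm_shift)
qed
lemma nrm_adj: "nrm (hm e) \<le> nrm (hp e) + 1 \<and> nrm (hp e) \<le> nrm (hm e) + 1"
  using nrm_adj0[of e] by simp

definition Hs :: "nat \<Rightarrow> nat \<Rightarrow> real" where "Hs R N = (\<Sum>j\<in>{R..<N}. 1 / real (j + 1))"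
definition cf :: "nat \<Rightarrow> nat \<Rightarrow> nat \<Rightarrow> real" where
  "cf R N k = (\<Sum>j\<in>{max k R..<N}. 1 / real (j + 1)) / Hs R N"
definition ca :: "nat \<Rightarrow> nat \<Rightarrow> nat \<Rightarrow> real" where
  "ca R N k = (if R \<le> k \<and> k < N then 1 / (real (k + 1) * Hs R N) else 0)"

lemma Hs_pos: "R < N \<Longrightarrow> Hs R N > 0"
  unfolding Hs_def by (intro sum_pos) auto

lemma cf_step: "cf R N k - cf R N (Suc k) = ca R N k"
proof (cases "R \<le> k \<and> k < N")
  case True
  then have "{max k R..<N} = insert k {max (Suc k) R..<N}" by auto
  then show ?thesis using True by (simp add: cf_def ca_def diff_divide_distrib[symmetric])
next
  case False
  then have "{max k R..<N} = {max (Suc k) R..<N}" by auto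
  then have "cf R N k = cf R N (Suc k)" unfolding cf_def by simp
  moreover have "ca R N k = 0" using False unfolding ca_def by auto
  ultimately show ?thesis by simp
qed

lemma cf_one: "k \<le> R \<Longrightarrow> R < N \<Longrightarrow> cf R N k = 1"
  using Hs_pos[of R N] by (simp add: cf_def Hs_def max_absorb2)

lemma cf_zero: "N \<le> k \<Longrightarrow> cf R N k = 0"
  by (simp add: cf_def)

lemma cf_bounds: "R < N \<Longrightarrow> 0 \<le> cf R N k \<and> cf R N k \<le> 1"
proof -
  assume RN: "R < N"
  have "(\<Sum>j\<in>{max k R..<N}. 1 / real (j + 1)) \<le> (\<Sum>j\<in>{R..<N}. 1 / real (j + 1))"
    by (intro sum_mono2) auto
  then show ?thesis using Hs_pos[OF RN] unfolding cf_def Hs_def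
    by (simp add: sum_nonneg divide_le_eq_1)
qed

definition chi :: "nat \<Rightarrow> nat \<Rightarrow> int \<times> int \<Rightarrow> real" where "chi R N p = cf R N (nrm p)"
definition DD :: "nat \<Rightarrow> nat \<Rightarrow> nat \<Rightarrow> real" where
  "DD R N k = (ca R N k)\<^sup>2 + (if k = 0 then 0 else (ca R N (k - 1))\<^sup>2)"

lemma edge_bd: "(chi R N (hp e) - chi R N (hm e))\<^sup>2 \<le> DD R N (nrm (hp e))"
proof -
  define k where "k = nrm (hp e)"
  define l where "l = nrm (hm e)"
  have kl: "l \<le> k + 1" "k \<le> l + 1" using nrm_adj[of e] by (auto simp: k_def l_def)
  have nn: "0 \<le> DD R N k" by (simp add: DD_def)
  consider "l = k" | "l = Suc k" | "k = Suc l" using kl by linarith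
  then show ?thesis
  proof cases
    case 1 then show ?thesis using nn by (simp add: chi_def k_def[symmetric] l_def[symmetric])
  next
    case 2
    then have "chi R N (hp e) - chi R N (hm e) = ca R N k"
      using cf_step[of R N k] by (simp add: chi_def k_def[symmetric] l_def[symmetric])
    then show ?thesis by (simp add: DD_def k_def[symmetric])
  next
    case 3
    then have "chi R N (hp e) - chi R N (hm e) = - ca R N l"
      using cf_step[of R N l] by (simp add: chi_def k_def[symmetric] l_def[symmetric])
    then show ?thesis using 3 by (simp add: DD_def k_def[symmetric])
  qed
qed

definition eo :: "(int \<times> int) \<times> dir \<Rightarrow> edge" where
  "eo x = (case x of ((i, j), D0) \<Rightarrow> (i, j, D0) | ((i, j), D1) \<Rightarrow> (i, j + 1, D1) | ((i, j), D2) \<Rightarrow> (i - 1, j + 1, D2))"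
definition edir :: "edge \<Rightarrow> dir" where "edir e = snd (snd e)"

lemma hp_eo: "hp (eo (p, d)) = p"
  by (cases p; cases d) (simp_all add: eo_def)
lemma edir_eo: "edir (eo (p, d)) = d"
  by (cases p; cases d) (simp_all add: eo_def edir_def)
lemma eo_hp: "eo (hp e, edir e) = e"
proof -
  obtain i j d where e: "e = (i, j, d)" by (cases e) auto
  show ?thesis unfolding e by (cases d) (simp_all add: eo_def edir_def)
qed
lemma inj_eo: "inj eo"
proof (rule injI)
  fix x y assume h: "eo x = eo y"
  obtain p d where x: "x = (p, d)" by (cases x)
  obtain q d' where y: "y = (q, d')" by (cases y)
  have "p = q" using h hp_eo[of p d] hp_eo[of q d'] unfolding x y by metis
  moreover have "d = d'" using h edir_eo[of p d] edir_eo[of q d'] unfolding x y by metis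
  ultimately show "x = y" unfolding x y by simp
qed

definition Box :: "nat \<Rightarrow> (int \<times> int) set" where "Box N = {- int N..int N} \<times> {- int N..int N}"

lemma finite_Box: "finite (Box N)" by (simp add: Box_def)
lemma in_Box: "nrm p \<le> N \<Longrightarrow> p \<in> Box N"
  by (cases p) (auto simp: Box_def nrm_def)

lemma dir_UNIV: "(UNIV :: dir set) = {D0, D1, D2}"
  using dir.exhaust by auto

lemma level_card: "card {p \<in> Box M. nrm p = k} \<le> 8 * k + 4"
proof -
  define A where "A = ({- int k, int k} \<times> {- int k..int k}) \<union> ({- int k..int k} \<times> {- int k, int k})"
  have sub: "{p \<in> Box M. nrm p = k} \<subseteq> A"
  proof
    fix p assume "p \<in> {p \<in> Box M. nrm p = k}"
    then have "nat (max \<bar>fst p\<bar> \<bar>snd p\<bar>) = k" by (simp add: nrm_def)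
    then have "max \<bar>fst p\<bar> \<bar>snd p\<bar> = int k" by linarith
    then show "p \<in> A" unfolding A_def by (cases p) (auto simp: max_def split: if_splits)
  qed
  have c1: "card {- int k, int k} \<le> 2" by (rule card_insert_le_m1) auto
  have c2: "card {- int k..int k} = 2 * k + 1" by simp
  have "card A \<le> card ({- int k, int k} \<times> {- int k..int k}) + card ({- int k..int k} \<times> {- int k, int k})"
    unfolding A_def by (rule card_Un_le)
  also have "\<dots> \<le> 2 * (2 * k + 1) + (2 * k + 1) * 2"
    unfolding card_cartesian_product c2 using c1 by (intro add_mono mult_mono) auto
  finally have "card A \<le> 8 * k + 4" by simp
  moreover have "finite A" unfolding A_def by simp
  ultimately show ?thesis using card_mono[OF _ sub] by (meson le_trans)
qed

lemma ca_zero: "N \<le> k \<Longrightarrow> ca R N k = 0" by (simp add: ca_def)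

lemma DD_sum:
  assumes RN: "R < N"
  shows "(\<Sum>k\<le>N+1. (8 * real k + 4) * DD R N k) = 16 / Hs R N"
proof -
  have Hp: "Hs R N > 0" using Hs_pos[OF RN] .
  have "(\<Sum>k\<le>N+1. (8 * real k + 4) * DD R N k) =
        (\<Sum>k\<le>N+1. (8 * real k + 4) * (ca R N k)\<^sup>2) +
        (\<Sum>k\<le>N+1. (8 * real k + 4) * (if k = 0 then 0 else (ca R N (k - 1))\<^sup>2))"
    by (simp add: DD_def distrib_left sum.distrib)
  also have "(\<Sum>k\<le>N+1. (8 * real k + 4) * (ca R N k)\<^sup>2) = (\<Sum>k<N. (8 * real k + 4) * (ca R N k)\<^sup>2)"
    by (rule sum.mono_neutral_right) (auto simp: ca_zero)
  also have "(\<Sum>k\<le>N+1. (8 * real k + 4) * (if k = 0 then 0 else (ca R N (k - 1))\<^sup>2)) =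
             (\<Sum>k\<le>N. (8 * real k + 12) * (ca R N k)\<^sup>2)"
    by (simp only: Suc_eq_plus1[symmetric] sum.atMost_Suc_shift) (simp add: algebra_simps)
  also have "(\<Sum>k\<le>N. (8 * real k + 12) * (ca R N k)\<^sup>2) = (\<Sum>k<N. (8 * real k + 12) * (ca R N k)\<^sup>2)"
    by (rule sum.mono_neutral_right) (auto simp: ca_zero)
  also have "(\<Sum>k<N. (8 * real k + 4) * (ca R N k)\<^sup>2) + (\<Sum>k<N. (8 * real k + 12) * (ca R N k)\<^sup>2)
      = (\<Sum>k<N. (if R \<le> k then 16 / (real (k + 1) * (Hs R N)\<^sup>2) else 0))"
    unfolding sum.distrib[symmetric]
  proof (rule sum.cong)
    fix k assume "k \<in> {..<N}"
    then show "(8 * real k + 4) * (ca R N k)\<^sup>2 + (8 * real k + 12) * (ca R N k)\<^sup>2 =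
        (if R \<le> k then 16 / (real (k + 1) * (Hs R N)\<^sup>2) else 0)"
    proof (cases "R \<le> k")
      case True
      define K where "K = real k + 1"
      have K: "K > 0" unfolding K_def by simp
      have "ca R N k = 1 / (K * Hs R N)" using True \<open>k \<in> {..<N}\<close> by (simp add: ca_def K_def)
      moreover have "(8 * real k + 4) * x\<^sup>2 + (8 * real k + 12) * x\<^sup>2 = 16 * K * x\<^sup>2" for x
        by (simp add: K_def algebra_simps)
      moreover have "16 * K * (1 / (K * Hs R N))\<^sup>2 = 16 / (K * (Hs R N)\<^sup>2)"
        using K Hp by (simp add: field_simps power2_eq_square)
      ultimately show ?thesis using True by (simp add: K_def)
    next
      case False then show ?thesis by (simp add: ca_def)
    qed
  qed simp
  also have "\<dots> = (\<Sum>k\<in>{R..<N}. 16 / (real (k + 1) * (Hs R N)\<^sup>2))"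
    by (rule sum.mono_neutral_cong_right) auto
  also have "\<dots> = 16 / (Hs R N)\<^sup>2 * Hs R N"
    unfolding Hs_def sum_distrib_left by (rule sum.cong) (auto simp: field_simps)
  also have "\<dots> = 16 / Hs R N" using Hp by (simp add: power2_eq_square)
  finally show ?thesis .
qed

lemma chi_energy:
  assumes RN: "R < N"
  shows "(\<lambda>e. (chi R N (hp e) - chi R N (hm e))\<^sup>2) summable_on UNIV \<and>
         infsum (\<lambda>e. (chi R N (hp e) - chi R N (hm e))\<^sup>2) UNIV \<le> 48 / Hs R N"
proof -
  define w where "w e = (chi R N (hp e) - chi R N (hm e))\<^sup>2" for e
  define E where "E = eo ` (Box (N + 1) \<times> UNIV)"
  have fd: "finite (UNIV :: dir set)" by (simp add: dir_UNIV)
  have fE: "finite E" unfolding E_def using finite_Box fd by simp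
  have z: "w e = 0" if "e \<notin> E" for e
  proof -
    have "hp e \<notin> Box (N + 1)"
    proof
      assume "hp e \<in> Box (N + 1)"
      then have "eo (hp e, edir e) \<in> E" unfolding E_def by auto
      with that show False by (simp add: eo_hp)
    qed
    then have "nrm (hp e) > N + 1" using in_Box by (meson not_le)
    moreover have "nrm (hp e) \<le> nrm (hm e) + 1" using nrm_adj[of e] by simp
    ultimately have "N \<le> nrm (hp e)" "N \<le> nrm (hm e)" by auto
    then show ?thesis unfolding w_def chi_def by (simp add: cf_zero)
  qed
  have sw: "w summable_on UNIV"
    by (rule finite_nonzero_values_imp_summable_on) (rule finite_subset[OF _ fE], use z in auto)
  have "infsum w UNIV = infsum w E"
    by (rule infsum_cong_neutral) (use z in auto)
  also have "\<dots> = sum w E" using fE by simp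
  also have "\<dots> \<le> sum (\<lambda>e. DD R N (nrm (hp e))) E"
    unfolding w_def by (rule sum_mono) (rule edge_bd)
  also have "\<dots> = sum ((\<lambda>e. DD R N (nrm (hp e))) \<circ> eo) (Box (N + 1) \<times> UNIV)"
    unfolding E_def by (rule sum.reindex) (use inj_eo in \<open>auto simp: inj_on_def\<close>)
  also have "\<dots> = (\<Sum>p\<in>Box (N + 1). \<Sum>d\<in>(UNIV::dir set). DD R N (nrm p))"
    unfolding sum.cartesian_product by (rule sum.cong) (auto simp: hp_eo)
  also have "\<dots> = 3 * (\<Sum>p\<in>Box (N + 1). DD R N (nrm p))"
    by (simp add: dir_UNIV sum_distrib_left)
  also have "(\<Sum>p\<in>Box (N + 1). DD R N (nrm p)) = (\<Sum>k\<le>N+1. \<Sum>p\<in>{p \<in> Box (N + 1). nrm p = k}. DD R N (nrm p))"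
  proof (rule sum.group[symmetric])
    show "finite (Box (N + 1))" by (rule finite_Box)
    show "finite {..N+1}" by simp
    show "nrm ` Box (N + 1) \<subseteq> {..N+1}"
      by (auto simp: Box_def nrm_def)
  qed
  also have "\<dots> = (\<Sum>k\<le>N+1. real (card {p \<in> Box (N + 1). nrm p = k}) * DD R N k)"
    by (rule sum.cong) auto
  also have "\<dots> \<le> (\<Sum>k\<le>N+1. (8 * real k + 4) * DD R N k)"
  proof (rule sum_mono)
    fix k
    have "real (card {p \<in> Box (N + 1). nrm p = k}) \<le> 8 * real k + 4"
      using level_card[of "N + 1" k] by linarith
    moreover have "0 \<le> DD R N k" by (simp add: DD_def)
    ultimately show "real (card {p \<in> Box (N + 1). nrm p = k}) * DD R N k \<le> (8 * real k + 4) * DD R N k"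
      by (rule mult_right_mono)
  qed
  also have "\<dots> = 16 / Hs R N" by (rule DD_sum[OF RN])
  finally have "infsum w UNIV \<le> 48 / Hs R N" by simp
  with sw show ?thesis unfolding w_def by simp
qed

lemma Hs_split: "R \<le> N \<Longrightarrow> (\<Sum>j<N. 1 / real (j + 1)) = (\<Sum>j<R. 1 / real (j + 1)) + Hs R N"
proof -
  assume "R \<le> N"
  then have "{..<N} = {..<R} \<union> {R..<N}" by auto
  then show ?thesis unfolding Hs_def by (metis finite_lessThan finite_atLeastLessThan sum.union_disjoint ivl_disj_int_one(2))
qed

lemma Hs_unbounded: "\<exists>N. R < N \<and> Hs R N \<ge> T"
proof -
  have "\<forall>\<^sub>F n in sequentially. T + harm R \<le> (harm n :: real)"
    using harm_at_top unfolding filterlim_at_top by blast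
  then obtain N0 where N0: "\<And>n. n \<ge> N0 \<Longrightarrow> T + harm R \<le> (harm n :: real)"
    unfolding eventually_sequentially by blast
  define N where "N = max N0 (R + 1)"
  have RN: "R < N" unfolding N_def by simp
  have "T + harm R \<le> (harm N :: real)" using N0[of N] unfolding N_def by simp
  moreover have "harm N = (harm R :: real) + Hs R N"
    using Hs_split[of R N] RN by (simp add: harm_altdef inverse_eq_divide add.commute)
  ultimately show ?thesis using RN by auto
qed

lemma sq3: "(a + b + c :: real)\<^sup>2 \<le> 3 * (a\<^sup>2 + b\<^sup>2 + c\<^sup>2)"
proof -
  have "3 * (a\<^sup>2 + b\<^sup>2 + c\<^sup>2) - (a + b + c)\<^sup>2 = (a - b)\<^sup>2 + (b - c)\<^sup>2 + (a - c)\<^sup>2"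
    by (simp add: power2_eq_square algebra_simps)
  moreover have "(a - b)\<^sup>2 + (b - c)\<^sup>2 + (a - c)\<^sup>2 \<ge> 0" by simp
  ultimately show ?thesis by linarith
qed

lemma tail_small:
  fixes f :: "'a \<Rightarrow> real"
  assumes sm: "f summable_on UNIV" and d: "\<delta> > 0"
  shows "\<exists>S. finite S \<and> infsum f (- S) \<le> \<delta>"
proof -
  obtain S where S: "finite S" "dist (sum f S) (infsum f UNIV) \<le> \<delta>"
    using infsum_finite_approximation[OF sm d] by blast
  have s2: "f summable_on (- S)" using summable_on_subset[OF sm] by blast
  have "infsum f UNIV = infsum f (S \<union> - S)" by simp
  also have "\<dots> = infsum f S + infsum f (- S)"
    by (rule infsum_Un_disjoint) (use S s2 in auto)
  finally have "infsum f (- S) = infsum f UNIV - sum f S" using S by simp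
  with S show ?thesis by (auto simp: dist_real_def)
qed

lemma edge_est:
  fixes Px Py :: complex and cx cy M :: real
  assumes M: "M \<ge> 0" and c: "0 \<le> cx" "cx \<le> 1"
  shows "(cmod ((Px - Py) - (of_real cx * clipC M Px - of_real cy * clipC M Py)))\<^sup>2 \<le>
         3 * ((cmod (Px - clipC M Px - (Py - clipC M Py)))\<^sup>2 + ((1 - cx) * cmod (Px - Py))\<^sup>2 + 4 * M\<^sup>2 * (cx - cy)\<^sup>2)"
proof -
  define Qx Qy where "Qx = clipC M Px" and "Qy = clipC M Py"
  define A B C where "A = (Px - Qx) - (Py - Qy)" and "B = of_real (1 - cx) * (Qx - Qy)"
    and "C = of_real (cy - cx) * Qy"
  have eq: "(Px - Py) - (of_real cx * Qx - of_real cy * Qy) = A + B + C"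
    unfolding A_def B_def C_def by (simp add: algebra_simps)
  have "cmod (A + B + C) \<le> cmod A + cmod B + cmod C"
    using norm_triangle_ineq[of "A + B" C] norm_triangle_ineq[of A B] by linarith
  then have "(cmod (A + B + C))\<^sup>2 \<le> (cmod A + cmod B + cmod C)\<^sup>2"
    by (simp add: power_mono)
  also have "\<dots> \<le> 3 * ((cmod A)\<^sup>2 + (cmod B)\<^sup>2 + (cmod C)\<^sup>2)" by (rule sq3)
  also have "(cmod B)\<^sup>2 \<le> ((1 - cx) * cmod (Px - Py))\<^sup>2"
  proof -
    have "cmod B = (1 - cx) * cmod (Qx - Qy)" unfolding B_def norm_mult norm_of_real using c by simp
    also have "\<dots> \<le> (1 - cx) * cmod (Px - Py)" unfolding Qx_def Qy_def
      using c by (intro mult_left_mono clipC_lip) auto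
    finally show ?thesis by (intro power_mono) auto
  qed
  also have "(cmod C)\<^sup>2 \<le> 4 * M\<^sup>2 * (cx - cy)\<^sup>2"
  proof -
    have "cmod C = \<bar>cy - cx\<bar> * cmod Qy" unfolding C_def norm_mult norm_of_real by simp
    also have "\<dots> \<le> \<bar>cy - cx\<bar> * (2 * M)" unfolding Qy_def using clipC_bd[OF M]
      by (intro mult_left_mono) auto
    finally have "(cmod C)\<^sup>2 \<le> (\<bar>cy - cx\<bar> * (2 * M))\<^sup>2" by (intro power_mono) auto
    also have "\<dots> = 4 * M\<^sup>2 * (cx - cy)\<^sup>2" by (simp add: power2_eq_square algebra_simps)
    finally show ?thesis .
  qed
  finally have X: "(cmod (A + B + C))\<^sup>2 \<le> 3 * ((cmod A)\<^sup>2 + ((1 - cx) * cmod (Px - Py))\<^sup>2 + 4 * M\<^sup>2 * (cx - cy)\<^sup>2)"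
    by simp
  have e1: "(cmod ((Px - Py) - (of_real cx * clipC M Px - of_real cy * clipC M Py)))\<^sup>2 = (cmod (A + B + C))\<^sup>2"
    using eq unfolding Qx_def Qy_def by simp
  have e2: "(cmod A)\<^sup>2 = (cmod (Px - clipC M Px - (Py - clipC M Py)))\<^sup>2"
    unfolding A_def Qx_def Qy_def by simp
  show ?thesis using X unfolding e1 e2 .
qed

lemma flow_approx:
  assumes dv: "divfree \<beta>" and sm: "(\<lambda>e. (cmod (\<beta> e))\<^sup>2) summable_on UNIV" and eps: "\<epsilon> > 0"
  shows "\<exists>\<psi>. finite {h. \<psi> h \<noteq> 0} \<and> (\<lambda>e. (cmod (\<beta> e - curl \<psi> e))\<^sup>2) summable_on UNIV \<and>
             infsum (\<lambda>e. (cmod (\<beta> e - curl \<psi> e))\<^sup>2) UNIV < \<epsilon>"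
proof -
  obtain P where P: "\<And>e. \<beta> e = curl P e" using potential_exists[OF dv] by blast
  define f where "f e = (cmod (\<beta> e))\<^sup>2" for e
  obtain S where S: "finite S" "infsum f (- S) \<le> \<epsilon> / 24"
    using tail_small[of f "\<epsilon> / 24"] sm eps unfolding f_def by auto
  define M where "M = 1 + (\<Sum>e\<in>S. cmod (P (hp e)) + cmod (P (hm e)))"
  have M0: "M \<ge> 1" unfolding M_def by (simp add: sum_nonneg)
  have MS: "cmod (P (hp e)) \<le> M \<and> cmod (P (hm e)) \<le> M" if "e \<in> S" for e
  proof -
    have "cmod (P (hp e)) + cmod (P (hm e)) \<le> (\<Sum>e\<in>S. cmod (P (hp e)) + cmod (P (hm e)))"
      using S(1) that by (intro member_le_sum) auto
    moreover have "0 \<le> cmod (P (hp e))" "0 \<le> cmod (P (hm e))" by simp_all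
    ultimately show ?thesis unfolding M_def by linarith
  qed
  define R where "R = (\<Sum>e\<in>S. nrm (hp e))"
  have RS: "nrm (hp e) \<le> R" if "e \<in> S" for e
    unfolding R_def using S(1) that by (intro member_le_sum) auto
  obtain N where RN: "R < N" and HN: "Hs R N \<ge> 1152 * M\<^sup>2 / \<epsilon>"
    using Hs_unbounded by blast
  have Hp: "Hs R N > 0" using Hs_pos[OF RN] .
  define cc where "cc = chi R N"
  have ccb: "0 \<le> cc p \<and> cc p \<le> 1" for p unfolding cc_def chi_def using cf_bounds[OF RN] by auto
  define \<psi> where "\<psi> p = of_real (cc p) * clipC M (P p)" for p
  have fin: "finite {h. \<psi> h \<noteq> 0}"
  proof (rule finite_subset[OF _ finite_Box[of N]])
    show "{h. \<psi> h \<noteq> 0} \<subseteq> Box N"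
    proof
      fix h assume "h \<in> {h. \<psi> h \<noteq> 0}"
      then have "cc h \<noteq> 0" unfolding \<psi>_def by auto
      then have "nrm h \<le> N" unfolding cc_def chi_def using cf_zero[of N "nrm h" R] by linarith
      then show "h \<in> Box N" by (rule in_Box)
    qed
  qed
  define w where "w e = (cc (hp e) - cc (hm e))\<^sup>2" for e
  have Ew: "w summable_on UNIV" "infsum w UNIV \<le> 48 / Hs R N"
    using chi_energy[OF RN] unfolding w_def cc_def by auto
  define t where "t e = (if e \<in> S then 0 else f e)" for e
  define g where "g e = 6 * t e + 12 * M\<^sup>2 * w e" for e
  have bound: "(cmod (\<beta> e - curl \<psi> e))\<^sup>2 \<le> g e" for e
  proof -
    define x y where "x = hp e" and "y = hm e"
    have be: "\<beta> e = P x - P y" unfolding P curl_def x_def y_def ..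
    have "\<beta> e - curl \<psi> e = (P x - P y) - (of_real (cc x) * clipC M (P x) - of_real (cc y) * clipC M (P y))"
      unfolding be by (simp add: curl_def \<psi>_def x_def y_def)
    then have est: "(cmod (\<beta> e - curl \<psi> e))\<^sup>2 \<le> 3 * ((cmod (P x - clipC M (P x) - (P y - clipC M (P y))))\<^sup>2 +
        ((1 - cc x) * cmod (P x - P y))\<^sup>2 + 4 * M\<^sup>2 * (cc x - cc y)\<^sup>2)"
      using edge_est[of M "cc x" "P x" "P y" "cc y"] M0 ccb[of x] by simp
    have wnn: "w e \<ge> 0" unfolding w_def by simp
    show ?thesis
    proof (cases "e \<in> S")
      case True
      have "clipC M (P x) = P x" "clipC M (P y) = P y"
        using MS[OF True] clipC_id unfolding x_def y_def by auto
      moreover have "cc x = 1" unfolding cc_def chi_def x_def using cf_one[OF RS[OF True] RN] .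
      ultimately have "(cmod (\<beta> e - curl \<psi> e))\<^sup>2 \<le> 3 * (4 * M\<^sup>2 * (cc x - cc y)\<^sup>2)" using est by simp
      then show ?thesis using True unfolding g_def t_def w_def x_def y_def by simp
    next
      case False
      have "(cmod (P x - clipC M (P x) - (P y - clipC M (P y))))\<^sup>2 \<le> f e"
        unfolding f_def be using clipC_lip2[of "P x" M "P y"] by (intro power_mono) auto
      moreover have "((1 - cc x) * cmod (P x - P y))\<^sup>2 \<le> f e"
      proof -
        have "(1 - cc x) * cmod (P x - P y) \<le> cmod (P x - P y)" using ccb[of x]
          by (simp add: mult_left_le_one_le)
        moreover have "0 \<le> (1 - cc x) * cmod (P x - P y)" using ccb[of x] by simp
        ultimately show ?thesis unfolding f_def be by (intro power_mono) auto
      qed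
      ultimately have "3 * ((cmod (P x - clipC M (P x) - (P y - clipC M (P y))))\<^sup>2 +
        ((1 - cc x) * cmod (P x - P y))\<^sup>2 + 4 * M\<^sup>2 * (cc x - cc y)\<^sup>2) \<le> 3 * (f e + f e + 4 * M\<^sup>2 * (cc x - cc y)\<^sup>2)"
        by (intro mult_left_mono add_mono) auto
      with est have "(cmod (\<beta> e - curl \<psi> e))\<^sup>2 \<le> 3 * (f e + f e + 4 * M\<^sup>2 * (cc x - cc y)\<^sup>2)"
        by linarith
      then show ?thesis using False unfolding g_def t_def w_def x_def y_def by simp
    qed
  qed
  have ft: "f summable_on UNIV" using sm unfolding f_def .
  have st: "t summable_on UNIV"
    by (rule summable_on_comparison_test[OF ft]) (auto simp: t_def f_def)
  have sg: "g summable_on UNIV" unfolding g_def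
    by (intro summable_on_add summable_on_cmult_right st Ew(1))
  have sl: "(\<lambda>e. (cmod (\<beta> e - curl \<psi> e))\<^sup>2) summable_on UNIV"
    by (rule summable_on_comparison_test[OF sg]) (use bound in auto)
  have "infsum (\<lambda>e. (cmod (\<beta> e - curl \<psi> e))\<^sup>2) UNIV \<le> infsum g UNIV"
    by (rule infsum_mono[OF sl sg]) (use bound in auto)
  also have "infsum g UNIV = 6 * infsum t UNIV + 12 * M\<^sup>2 * infsum w UNIV"
    unfolding g_def
    by (subst infsum_add) (auto intro!: summable_on_cmult_right st Ew(1) simp: infsum_cmult_right')
  also have "infsum t UNIV = infsum f (- S)"
    by (rule infsum_cong_neutral) (auto simp: t_def)
  also have "6 * infsum f (- S) + 12 * M\<^sup>2 * infsum w UNIV \<le> 6 * (\<epsilon> / 24) + 12 * M\<^sup>2 * (48 / Hs R N)"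
    using S(2) Ew(2) by (intro add_mono mult_left_mono) auto
  also have "12 * M\<^sup>2 * (48 / Hs R N) \<le> \<epsilon> / 2"
  proof -
    have "576 * M\<^sup>2 \<le> \<epsilon> / 2 * Hs R N" using HN eps by (simp add: field_simps)
    then show ?thesis using Hp by (simp add: field_simps)
  qed
  finally have "infsum (\<lambda>e. (cmod (\<beta> e - curl \<psi> e))\<^sup>2) UNIV < \<epsilon>" using eps by linarith
  with fin sl show ?thesis by blast
qed

locale ES =
  fixes a kinv m lam :: real
  assumes a_pos: "a > 0" and kinv_nn: "kinv \<ge> 0" and m_nn: "m \<ge> 0"
    and cond: "(1 - (a * kinv)\<^sup>2 * (lam / a)) * sincE (lam / a) + 2 * (a * kinv) * cosE (lam / a) = 0"
begin

definition "rho = a * kinv"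
definition "k = sqrt (lam / a)"
definition "p = rho * k"
definition phi :: "real \<Rightarrow> real" where "phi t = p * cos (k * t) + sin (k * t)"
definition dphi :: "real \<Rightarrow> real" where "dphi t = k * (cos (k * t) - p * sin (k * t))"
definition "s = cos k - p * sin k"

lemma lam_gt0: "lam > 0" using lam_pos[OF a_pos kinv_nn cond] .
lemma k_pos: "k > 0" unfolding k_def using lam_gt0 a_pos by simp
lemma k_sq: "k\<^sup>2 = lam / a" unfolding k_def using lam_gt0 a_pos by simp
lemma a_k_sq: "a * k\<^sup>2 = lam" using k_sq a_pos by simp

lemma trig_cond: "(1 - p\<^sup>2) * sin k + 2 * p * cos k = 0"
proof -
  have z: "lam / a > 0" using lam_gt0 a_pos by simp
  have c1: "cosE (lam / a) = cos k" "sincE (lam / a) = sin k / k"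
    using cosE_pos[OF z] sincE_pos[OF z] unfolding k_def by simp_all
  have c2: "(a * kinv)\<^sup>2 * (lam / a) = p\<^sup>2"
    unfolding p_def rho_def power_mult_distrib k_sq ..
  have "(1 - p\<^sup>2) * (sin k / k) + 2 * rho * cos k = 0"
    using cond unfolding c1 c2 rho_def .
  then have "k * ((1 - p\<^sup>2) * (sin k / k) + 2 * rho * cos k) = 0" by simp
  moreover have "k * ((1 - p\<^sup>2) * (sin k / k) + 2 * rho * cos k) = (1 - p\<^sup>2) * sin k + 2 * p * cos k"
    using k_pos unfolding p_def by (simp add: field_simps)
  ultimately show ?thesis by metis
qed

lemma s_sq: "s\<^sup>2 = 1"
proof -
  have e: "s\<^sup>2 = (cos k)\<^sup>2 - sin k * (2 * p * cos k) + p\<^sup>2 * (sin k)\<^sup>2"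
    unfolding s_def by (simp add: power2_eq_square algebra_simps)
  have "2 * p * cos k = - ((1 - p\<^sup>2) * sin k)" using trig_cond by linarith
  then have "s\<^sup>2 = (cos k)\<^sup>2 + sin k * ((1 - p\<^sup>2) * sin k) + p\<^sup>2 * (sin k)\<^sup>2" using e by simp
  also have "\<dots> = (cos k)\<^sup>2 + (sin k)\<^sup>2" by (simp add: power2_eq_square algebra_simps)
  finally show ?thesis by simp
qed

lemma s_ne0: "s \<noteq> 0" using s_sq by auto

lemma phi0: "phi 0 = p" by (simp add: phi_def)
lemma dphi0: "dphi 0 = k" by (simp add: dphi_def)
lemma dphi1: "dphi 1 = k * s" by (simp add: dphi_def s_def)
lemma robin1: "phi 1 + rho * dphi 1 = 0"
proof -
  have "phi 1 + rho * dphi 1 = (1 - p\<^sup>2) * sin k + 2 * p * cos k"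
    unfolding phi_def dphi_def p_def by (simp add: power2_eq_square algebra_simps)
  then show ?thesis using trig_cond by simp
qed

lemma phi_deriv: "(phi has_real_derivative dphi t) (at t within S)"
  unfolding phi_def dphi_def
  by (auto intro!: derivative_eq_intros simp: algebra_simps)

lemma dphi_deriv: "(dphi has_real_derivative (- k\<^sup>2 * phi t)) (at t within S)"
  unfolding phi_def dphi_def
  by (auto intro!: derivative_eq_intros simp: algebra_simps power2_eq_square)

lemma phi_cont: "continuous_on S phi"
  unfolding phi_def by (intro continuous_intros)
lemma dphi_cont: "continuous_on S dphi"
  unfolding dphi_def by (intro continuous_intros)

lemma phi_nonzero: "\<exists>t\<in>{0..1}. phi t \<noteq> 0"
proof (cases "p = 0")
  case False then show ?thesis using phi0 by force
next
  case True
  define t where "t = min 1 (1 / k)"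
  have t: "t \<in> {0..1}" "0 < k * t" "k * t \<le> 1" using k_pos unfolding t_def
    by (auto simp: min_def field_simps)
  have "sin (k * t) > 0" using t(2,3) pi_gt3 by (intro sin_gt_zero) auto
  then show ?thesis using True t(1) unfolding phi_def by force
qed

definition "Phi = integral {0..1} (\<lambda>t. (phi t)\<^sup>2)"

lemma Phi_pos: "Phi > 0"
proof -
  have c: "continuous_on (cbox 0 1) (\<lambda>t. (phi t)\<^sup>2)" by (intro continuous_intros phi_cont)
  have int: "((\<lambda>t. (phi t)\<^sup>2) has_integral Phi) (cbox 0 1)"
    unfolding Phi_def using integrable_continuous_real[of 0 1 "\<lambda>t. (phi t)\<^sup>2"] c
    by (simp add: has_integral_integral)
  have ge: "Phi \<ge> 0" unfolding Phi_def by (intro integral_nonneg) (use integrable_continuous_real c in auto)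
  obtain t where t: "t \<in> {0..1}" "phi t \<noteq> 0" using phi_nonzero by blast
  show ?thesis
  proof (rule ccontr)
    assume "\<not> Phi > 0"
    then have "Phi = 0" using ge by simp
    then have "(phi t)\<^sup>2 = 0"
      using has_integral_0_cbox_imp_0[OF c _ _ _, of t] int t(1) by auto
    with t(2) show False by simp
  qed
qed

end

lemma cs_scale: "(cos x * cos x) *\<^sub>R v + (sin x * sin x) *\<^sub>R v = (v::'a::real_vector)"
proof -
  have "(cos x * cos x) *\<^sub>R v + (sin x * sin x) *\<^sub>R v = (cos x * cos x + sin x * sin x) *\<^sub>R v"
    by (simp only: scaleR_add_left)
  also have "cos x * cos x + sin x * sin x = 1" using sin_cos_squared_add[of x] by (simp add: power2_eq_square)
  finally show ?thesis by simp
qed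

lemma rot1: "k \<noteq> 0 \<Longrightarrow> c *\<^sub>R (c *\<^sub>R x - (s / k) *\<^sub>R y) + s *\<^sub>R (s *\<^sub>R x + (c / k) *\<^sub>R y) =
    (c * c) *\<^sub>R x + (s * s) *\<^sub>R (x::'a::real_vector)"
  by (simp add: algebra_simps)
lemma rot2: "k \<noteq> 0 \<Longrightarrow> k *\<^sub>R (c *\<^sub>R (s *\<^sub>R x + (c / k) *\<^sub>R y) - s *\<^sub>R (c *\<^sub>R x - (s / k) *\<^sub>R y)) =
    (c * c) *\<^sub>R y + (s * s) *\<^sub>R (y::'a::real_vector)"
  by (simp add: algebra_simps)
lemma dzero1: "k \<noteq> 0 \<Longrightarrow> c *\<^sub>R d + (- k * s) *\<^sub>R x - ((s / k) *\<^sub>R (- k\<^sup>2 *\<^sub>R x) + c *\<^sub>R d) = (0::'a::real_vector)"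
  by (simp add: algebra_simps power2_eq_square)
lemma dzero2: "k \<noteq> 0 \<Longrightarrow> s *\<^sub>R d + (k * c) *\<^sub>R x + ((c / k) *\<^sub>R (- k\<^sup>2 *\<^sub>R x) + (- s) *\<^sub>R d) = (0::'a::real_vector)"
  by (simp add: algebra_simps power2_eq_square)

context ES begin

lemma dcos: "((\<lambda>u. cos (k * u)) has_field_derivative (- k * sin (k * u))) (at u within S)"
  by (auto intro!: derivative_eq_intros)
lemma dsin: "((\<lambda>u. sin (k * u)) has_field_derivative (k * cos (k * u))) (at u within S)"
  by (auto intro!: derivative_eq_intros)
lemma dsink: "((\<lambda>u. sin (k * u) / k) has_field_derivative cos (k * u)) (at u within S)"
  using k_pos by (auto intro!: derivative_eq_intros)
lemma dcosk: "((\<lambda>u. cos (k * u) / k) has_field_derivative (- sin (k * u))) (at u within S)"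
  using k_pos by (auto intro!: derivative_eq_intros)

lemma ode_sol:
  assumes H: "H2_rep f g"
    and AE: "AE t in lebesgue. t \<in> {0..1} \<longrightarrow> - of_real a * g t = of_real lam * f t"
    and t: "t \<in> {0..1}"
  shows "f t = cos (k * t) *\<^sub>R f 0 + (sin (k * t) / k) *\<^sub>R deriv01 f 0 \<and>
         deriv01 f t = (- k * sin (k * t)) *\<^sub>R f 0 + cos (k * t) *\<^sub>R deriv01 f 0"
proof -
  have hd: "\<And>t. t \<in> {0..1} \<Longrightarrow> (f has_vector_derivative deriv01 f t) (at t within {0..1})"
   and hi: "\<And>t. t \<in> {0..1} \<Longrightarrow> deriv01 f t = deriv01 f 0 + integral {0..t} g"
    using H unfolding H2_rep_def by blast+
  have cf: "continuous_on {0..1} f" by (rule continuous_on_vector_derivative) (rule hd)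
  obtain N where N: "{x \<in> space lebesgue. \<not> (x \<in> {0..1} \<longrightarrow> - of_real a * g x = of_real lam * f x)} \<subseteq> N"
    "emeasure lebesgue N = 0" "N \<in> sets lebesgue"
    using AE by (rule AE_E)
  have negN: "negligible N" using N(2,3) by (simp add: negligible_iff_null_sets null_sets_def)
  have gf: "g x = (- k\<^sup>2) *\<^sub>R f x" if "x \<in> {0..1}" "x \<notin> N" for x
  proof -
    have eq: "- of_real a * g x = of_real lam * f x" using N(1) that by auto
    have an: "(of_real a :: complex) \<noteq> 0" using a_pos by simp
    have "g x = (- of_real a * g x) * (- 1 / of_real a)" using an by (simp add: field_simps)
    also have "\<dots> = of_real lam * f x * (- 1 / of_real a)" using eq by simp
    also have "\<dots> = - of_real (lam / a) * f x" using an by (simp add: field_simps of_real_divide)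
    finally have "g x = - of_real (lam / a) * f x" .
    then show ?thesis by (simp add: k_sq scaleR_conv_of_real)
  qed
  define F where "F u = integral {0..u} f" for u
  define D where "D u = deriv01 f 0 - k\<^sup>2 *\<^sub>R F u" for u
  have fD: "deriv01 f u = D u" if "u \<in> {0..1}" for u
  proof -
    have "integral {0..u} g = integral {0..u} (\<lambda>x. (- k\<^sup>2) *\<^sub>R f x)"
      by (rule integral_spike[OF negN]) (use that gf in auto)
    then show ?thesis using hi[OF that] unfolding D_def F_def by simp
  qed
  have hF: "(F has_vector_derivative f u) (at u within {0..1})" if "u \<in> {0..1}" for u
    unfolding F_def by (rule integral_has_vector_derivative[OF cf that])
  have hD: "(D has_vector_derivative (- k\<^sup>2 *\<^sub>R f u)) (at u within {0..1})" if "u \<in> {0..1}" for u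
  proof -
    have "((\<lambda>u. deriv01 f 0 - (\<lambda>_. k\<^sup>2) u *\<^sub>R F u) has_vector_derivative (0 - ((\<lambda>_. k\<^sup>2) u *\<^sub>R f u + 0 *\<^sub>R F u))) (at u within {0..1})"
      by (intro has_vector_derivative_diff has_vector_derivative_const has_vector_derivative_scaleR DERIV_const hF[OF that])
    then show ?thesis unfolding D_def by simp
  qed
  have hf: "(f has_vector_derivative D u) (at u within {0..1})" if "u \<in> {0..1}" for u
    using hd[OF that] fD[OF that] by simp
  define PP where "PP u = cos (k * u) *\<^sub>R f u - (sin (k * u) / k) *\<^sub>R D u" for u
  define QQ where "QQ u = sin (k * u) *\<^sub>R f u + (cos (k * u) / k) *\<^sub>R D u" for u
  have kz: "k \<noteq> 0" using k_pos by simp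
  have dP: "(PP has_vector_derivative 0) (at u within {0..1})" if "u \<in> {0..1}" for u
  proof -
    have "(PP has_vector_derivative (cos (k * u) *\<^sub>R D u + (- k * sin (k * u)) *\<^sub>R f u -
        ((sin (k * u) / k) *\<^sub>R (- k\<^sup>2 *\<^sub>R f u) + cos (k * u) *\<^sub>R D u))) (at u within {0..1})"
      unfolding PP_def
      by (intro has_vector_derivative_diff has_vector_derivative_scaleR dcos dsink hf[OF that] hD[OF that])
    then show ?thesis unfolding dzero1[OF kz] .
  qed
  have dQ: "(QQ has_vector_derivative 0) (at u within {0..1})" if "u \<in> {0..1}" for u
  proof -
    have "(QQ has_vector_derivative (sin (k * u) *\<^sub>R D u + (k * cos (k * u)) *\<^sub>R f u +
        ((cos (k * u) / k) *\<^sub>R (- k\<^sup>2 *\<^sub>R f u) + (- sin (k * u)) *\<^sub>R D u))) (at u within {0..1})"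
      unfolding QQ_def
      by (intro has_vector_derivative_add has_vector_derivative_scaleR dsin dcosk hf[OF that] hD[OF that])
    then show ?thesis unfolding dzero2[OF kz] .
  qed
  obtain c1 where c1: "\<And>u. u \<in> {0..1} \<Longrightarrow> PP u = c1"
    using has_vector_derivative_zero_constant[of "{0..1}" PP] dP by auto
  obtain c2 where c2: "\<And>u. u \<in> {0..1} \<Longrightarrow> QQ u = c2"
    using has_vector_derivative_zero_constant[of "{0..1}" QQ] dQ by auto
  have P0: "PP 0 = f 0" by (simp add: PP_def)
  have Q0: "QQ 0 = (1 / k) *\<^sub>R deriv01 f 0" by (simp add: QQ_def D_def F_def)
  have Pt: "PP t = f 0" using c1[OF t] c1[of 0] P0 by simp
  have Qt: "QQ t = (1 / k) *\<^sub>R deriv01 f 0" using c2[OF t] c2[of 0] Q0 by simp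
  have "f t = cos (k * t) *\<^sub>R PP t + sin (k * t) *\<^sub>R QQ t"
    unfolding PP_def QQ_def rot1[OF kz] cs_scale ..
  then have e1: "f t = cos (k * t) *\<^sub>R f 0 + (sin (k * t) / k) *\<^sub>R deriv01 f 0"
    unfolding Pt Qt by simp
  have "D t = k *\<^sub>R (cos (k * t) *\<^sub>R QQ t - sin (k * t) *\<^sub>R PP t)"
    unfolding PP_def QQ_def rot2[OF kz] cs_scale ..
  then have "deriv01 f t = k *\<^sub>R (cos (k * t) *\<^sub>R ((1 / k) *\<^sub>R deriv01 f 0) - sin (k * t) *\<^sub>R f 0)"
    unfolding Pt Qt fD[OF t] .
  also have "\<dots> = (- k * sin (k * t)) *\<^sub>R f 0 + cos (k * t) *\<^sub>R deriv01 f 0"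
    using kz by (simp add: scaleR_diff_right)
  finally show ?thesis using e1 by simp
qed

end

lemma head_ne_tail: "headv e \<noteq> tailv e"
proof -
  obtain i j d where e: "e = (i, j, d)" by (cases e) auto
  show ?thesis unfolding e by (cases d) auto
qed
lemma tail_inc: "e \<in> incident (tailv e)" by (simp add: incident_def)
lemma head_inc: "e \<in> incident (headv e)" by (simp add: incident_def)
lemma vval_tail: "vval u e (tailv e) = u e 0" by (simp add: vval_def)
lemma vval_head: "vval u e (headv e) = u e 1" using head_ne_tail by (simp add: vval_def)
lemma dnorm_tail: "dnorm u e (tailv e) = - deriv01 (u e) 0" by (simp add: dnorm_def)
lemma dnorm_head: "dnorm u e (headv e) = deriv01 (u e) 1" using head_ne_tail by (simp add: dnorm_def)

context ES begin

lemma coefA: "cos k - rho * k * sin k = s" unfolding s_def p_def by simp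
lemma coefB: "sin k / k + rho * cos k = - s * rho"
proof -
  have "k * (sin k / k + rho * cos k + s * rho) = (1 - p\<^sup>2) * sin k + 2 * p * cos k"
    using k_pos unfolding s_def p_def by (simp add: field_simps power2_eq_square)
  then have "k * (sin k / k + rho * cos k + s * rho) = 0" using trig_cond by simp
  then show ?thesis using k_pos by simp
qed

lemma robin_rel:
  fixes A Bd :: complex
  shows "(cos k *\<^sub>R A + (sin k / k) *\<^sub>R Bd) + of_real rho * ((- k * sin k) *\<^sub>R A + cos k *\<^sub>R Bd) =
         of_real s * (A + of_real rho * (- Bd))"
proof -
  have "(cos k *\<^sub>R A + (sin k / k) *\<^sub>R Bd) + of_real rho * ((- k * sin k) *\<^sub>R A + cos k *\<^sub>R Bd) =
        of_real (cos k - rho * k * sin k) * A + of_real (sin k / k + rho * cos k) * Bd"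
    by (simp add: scaleR_conv_of_real algebra_simps)
  also have "\<dots> = of_real s * A + of_real (- s * rho) * Bd" unfolding coefA coefB ..
  also have "\<dots> = of_real s * (A + of_real rho * (- Bd))" by (simp add: algebra_simps)
  finally show ?thesis .
qed

lemma const_summable_zero:
  fixes c :: real
  assumes "(\<lambda>n::nat. c) summable_on UNIV" "c \<ge> 0"
  shows "c = 0"
proof -
  have "summable (\<lambda>n::nat. c)" using summable_on_UNIV_nonneg_real_iff[of "\<lambda>n::nat. c"] assms by simp
  then have "(\<lambda>n::nat. c) \<longlonglongrightarrow> 0" by (rule summable_LIMSEQ_zero)
  then show ?thesis using LIMSEQ_const_iff[of c 0] by simp
qed

lemma omega_zero:
  fixes \<omega> :: "vertex \<Rightarrow> complex"
  assumes rel: "\<And>e. cmod (\<omega> (headv e)) = cmod (\<omega> (tailv e))"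
    and sm: "(\<lambda>v. (cmod (\<omega> v))\<^sup>2) summable_on UNIV"
  shows "\<omega> v = 0"
proof -
  define w where "w i j b = cmod (\<omega> (i, j, b))" for i j b
  have r0: "w i j True = w i j False" for i j using rel[of "(i, j, D0)"] by (simp add: w_def)
  have r1: "w i j True = w (i + 1) j False" for i j using rel[of "(i + 1, j, D1)"] by (simp add: w_def)
  have r2: "w i j True = w i (j + 1) False" for i j using rel[of "(i, j + 1, D2)"] by (simp add: w_def)
  have si: "w (i + 1) j False = w i j False" for i j using r0[of i j] r1[of i j] by simp
  have sj: "w i (j + 1) False = w i j False" for i j using r0[of i j] r2[of i j] by simp
  have wi: "w i j False = w 0 j False" for i j
  proof (induct i rule: int_induct[where k = 0])
    case base then show ?case by simp
  next
    case (step1 i) then show ?case using si[of i j] by simp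
  next
    case (step2 i) then show ?case using si[of "i - 1" j] by simp
  qed
  have wj: "w 0 j False = w 0 0 False" for j
  proof (induct j rule: int_induct[where k = 0])
    case base then show ?case by simp
  next
    case (step1 j) then show ?case using sj[of 0 j] by simp
  next
    case (step2 j) then show ?case using sj[of 0 "j - 1"] by simp
  qed
  define c where "c = w 0 0 False"
  have wc: "w i j b = c" for i j b
    using wi[of i j] wj[of j] r0[of i j] unfolding c_def by (cases b) auto
  define h where "h n = (int n, 0::int, False)" for n :: nat
  have "inj h" by (auto simp: h_def inj_def)
  have "(\<lambda>v. (cmod (\<omega> v))\<^sup>2) summable_on range h" using summable_on_subset[OF sm] by blast
  moreover have "(\<lambda>v. (cmod (\<omega> v))\<^sup>2) summable_on h ` UNIV \<longleftrightarrow> ((\<lambda>v. (cmod (\<omega> v))\<^sup>2) \<circ> h) summable_on UNIV"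
    by (rule summable_on_reindex) (rule \<open>inj h\<close>)
  ultimately have "((\<lambda>v. (cmod (\<omega> v))\<^sup>2) \<circ> h) summable_on UNIV" by simp
  moreover have "((\<lambda>v. (cmod (\<omega> v))\<^sup>2) \<circ> h) = (\<lambda>n. c\<^sup>2)"
    using wc unfolding h_def w_def by auto
  ultimately have "c\<^sup>2 = 0" using const_summable_zero[of "c\<^sup>2"] by simp
  then have "c = 0" by simp
  obtain i j b where v: "v = (i, j, b)" by (cases v) auto
  show ?thesis using wc[of i j b] \<open>c = 0\<close> unfolding v w_def by simp
qed

end

context ES begin

definition Bc :: "state \<Rightarrow> edge \<Rightarrow> complex" where "Bc y e = deriv01 (fst y e) 0 / of_real k"

lemma s_abs: "\<bar>s\<bar> = 1" using s_sq power2_eq_1_iff[of s] by auto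

lemma phi_int: "(\<lambda>t. (phi t)\<^sup>2) integrable_on {0..1}"
  by (intro integrable_continuous_interval continuous_intros phi_cont)
lemma dphi_int: "(\<lambda>t. (dphi t)\<^sup>2) integrable_on {0..1}"
  by (intro integrable_continuous_interval continuous_intros dphi_cont)

lemma eig_structure:
  assumes y: "y \<in> A0_eig a kinv m lam"
  shows "(\<forall>v. snd y v = 0) \<and> divfree (Bc y) \<and>
    (\<forall>e. \<forall>t\<in>{0..1}. fst y e t = Bc y e * of_real (phi t) \<and> deriv01 (fst y e) t = Bc y e * of_real (dphi t)) \<and>
    (\<lambda>e. (cmod (Bc y e))\<^sup>2) summable_on UNIV"
proof -
  obtain g where W: "A0_dom_wit a kinv m y g"
    and AEs: "\<And>e. AE t in lebesgue. t \<in> {0..1} \<longrightarrow> - of_real a * g e t = of_real lam * fst y e t"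
    and Km: "m > 0 \<longrightarrow> (\<forall>v. of_real (a / m) * (\<Sum>e\<in>incident v. dnorm (fst y) e v) = of_real lam * snd y v)"
    using y unfolding A0_eig_def by blast
  have H2: "\<And>e. H2_rep (fst y e) (g e)"
   and SH: "(\<lambda>e. H2_normsq (fst y e) (g e)) summable_on UNIV"
   and SO: "(\<lambda>v. (cmod (snd y v))\<^sup>2) summable_on UNIV"
   and RB: "\<And>v e. e \<in> incident v \<Longrightarrow> vval (fst y) e v + of_real rho * dnorm (fst y) e v = snd y v"
   and K0: "m = 0 \<longrightarrow> (\<forall>v. (\<Sum>e\<in>incident v. dnorm (fst y) e v) = 0)"
    using W unfolding A0_dom_wit_def rho_def by blast+
  define u where "u = fst y"
  define A where "A e = u e 0" for e
  define Bd where "Bd e = deriv01 (u e) 0" for e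
  have sol: "u e t = cos (k * t) *\<^sub>R A e + (sin (k * t) / k) *\<^sub>R Bd e \<and>
      deriv01 (u e) t = (- k * sin (k * t)) *\<^sub>R A e + cos (k * t) *\<^sub>R Bd e" if "t \<in> {0..1}" for e t
    using ode_sol[OF H2[of e] AEs[of e] that] unfolding u_def A_def Bd_def by simp
  have rt: "A e + of_real rho * (- Bd e) = snd y (tailv e)" for e
    using RB[OF tail_inc, of e] unfolding vval_tail dnorm_tail A_def Bd_def u_def by simp
  have rh: "snd y (headv e) = of_real s * snd y (tailv e)" for e
  proof -
    have "u e 1 + of_real rho * deriv01 (u e) 1 = snd y (headv e)"
      using RB[OF head_inc, of e] unfolding vval_head dnorm_head u_def by simp
    moreover have "u e 1 + of_real rho * deriv01 (u e) 1 =
        (cos k *\<^sub>R A e + (sin k / k) *\<^sub>R Bd e) + of_real rho * ((- k * sin k) *\<^sub>R A e + cos k *\<^sub>R Bd e)"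
      using sol[of 1 e] by simp
    ultimately show ?thesis unfolding robin_rel rt by simp
  qed
  have om: "\<forall>v. snd y v = 0"
  proof
    fix v
    show "snd y v = 0"
    proof (rule omega_zero[OF _ SO])
      fix e show "cmod (snd y (headv e)) = cmod (snd y (tailv e))"
        unfolding rh norm_mult norm_of_real s_abs by simp
    qed
  qed
  have kz: "k \<noteq> 0" using k_pos by simp
  have ABd: "A e = of_real rho * Bd e" for e using rt[of e] om by (simp add: algebra_simps)
  have BcBd: "Bd e = of_real k * Bc y e" for e unfolding Bc_def Bd_def u_def using kz by simp
  have forms: "fst y e t = Bc y e * of_real (phi t) \<and> deriv01 (fst y e) t = Bc y e * of_real (dphi t)"
    if "t \<in> {0..1}" for e t
  proof -
    have "u e t = cos (k * t) *\<^sub>R (of_real rho * (of_real k * Bc y e)) + (sin (k * t) / k) *\<^sub>R (of_real k * Bc y e)"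
      using sol[OF that, of e] unfolding ABd BcBd by simp
    also have "\<dots> = Bc y e * of_real (phi t)"
      using kz unfolding phi_def p_def by (simp add: scaleR_conv_of_real algebra_simps)
    finally have 1: "u e t = Bc y e * of_real (phi t)" .
    have "deriv01 (u e) t = (- k * sin (k * t)) *\<^sub>R (of_real rho * (of_real k * Bc y e)) + cos (k * t) *\<^sub>R (of_real k * Bc y e)"
      using sol[OF that, of e] unfolding ABd BcBd by simp
    also have "\<dots> = Bc y e * of_real (dphi t)"
      unfolding dphi_def p_def by (simp add: scaleR_conv_of_real algebra_simps)
    finally have 2: "deriv01 (u e) t = Bc y e * of_real (dphi t)" .
    show ?thesis using 1 2 unfolding u_def by simp
  qed
  have kirch: "(\<Sum>e\<in>incident v. dnorm (fst y) e v) = 0" for v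
  proof (cases "m = 0")
    case True then show ?thesis using K0 by blast
  next
    case False
    then have mp: "m > 0" using m_nn by simp
    have "of_real (a / m) * (\<Sum>e\<in>incident v. dnorm (fst y) e v) = of_real lam * snd y v" using Km mp by blast
    then have "of_real (a / m) * (\<Sum>e\<in>incident v. dnorm (fst y) e v) = 0" using om by simp
    moreover have "(of_real (a / m) :: complex) \<noteq> 0" using a_pos mp by simp
    ultimately show ?thesis by simp
  qed
  have dv: "divfree (Bc y)" unfolding divfree_def
  proof
    fix v :: vertex
    obtain i j b where v: "v = (i, j, b)" by (cases v) auto
    show "(\<Sum>e\<in>incident v. Bc y e) = 0"
    proof (cases b)
      case False
      have "(\<Sum>e\<in>incident v. dnorm (fst y) e v) = (\<Sum>e\<in>incident v. - of_real k * Bc y e)"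
      proof (rule sum.cong)
        fix e assume "e \<in> incident v"
        then have "tailv e = v" using tail_incident_A[of e i j] False unfolding v by simp
        then show "dnorm (fst y) e v = - of_real k * Bc y e"
          using forms[of 0 e] unfolding dnorm_def by (auto simp: dphi0)
      qed simp
      then have "- of_real k * (\<Sum>e\<in>incident v. Bc y e) = 0" using kirch[of v] by (simp add: sum_distrib_left)
      then show ?thesis using kz by simp
    next
      case True
      have "(\<Sum>e\<in>incident v. dnorm (fst y) e v) = (\<Sum>e\<in>incident v. of_real (k * s) * Bc y e)"
      proof (rule sum.cong)
        fix e assume "e \<in> incident v"
        then have "tailv e \<noteq> v" using tail_incident_B[of e i j] True unfolding v by simp
        then show "dnorm (fst y) e v = of_real (k * s) * Bc y e"
          using forms[of 1 e] unfolding dnorm_def by (auto simp: dphi1)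
      qed simp
      then have "of_real (k * s) * (\<Sum>e\<in>incident v. Bc y e) = 0" using kirch[of v] by (simp add: sum_distrib_left)
      then show ?thesis using kz s_ne0 by simp
    qed
  qed
  have l2b: "(cmod (Bc y e))\<^sup>2 \<le> H2_normsq (fst y e) (g e) / Phi" for e
  proof -
    have sg: "sq_int (g e)" using H2[of e] unfolding H2_rep_def by blast
    have gi: "(\<lambda>t. (cmod (g e t))\<^sup>2) integrable_on {0..1}" using sg unfolding sq_int_def by blast
    define c where "c = (cmod (Bc y e))\<^sup>2"
    define h where "h t = c * (phi t)\<^sup>2 + c * (dphi t)\<^sup>2 + (cmod (g e t))\<^sup>2" for t
    have hi: "h integrable_on {0..1}" unfolding h_def
      by (intro integrable_add gi integrable_on_mult_right phi_int dphi_int)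
    have "H2_normsq (fst y e) (g e) = integral {0..1} h"
      unfolding H2_normsq_def
    proof (rule Henstock_Kurzweil_Integration.integral_cong)
      fix t :: real assume "t \<in> {0..1}"
      then show "(cmod (fst y e t))\<^sup>2 + (cmod (deriv01 (fst y e) t))\<^sup>2 + (cmod (g e t))\<^sup>2 = h t"
        using forms[of t e] unfolding h_def c_def by (simp add: norm_mult power_mult_distrib)
    qed
    also have "integral {0..1} h \<ge> integral {0..1} (\<lambda>t. c * (phi t)\<^sup>2)"
      by (rule integral_le) (use hi integrable_on_mult_right[OF phi_int, of c] in \<open>auto simp: h_def c_def\<close>)
    also have "integral {0..1} (\<lambda>t. c * (phi t)\<^sup>2) = c * Phi"
      unfolding Phi_def using integral_mult[OF phi_int, of c] by simp
    finally have "c * Phi \<le> H2_normsq (fst y e) (g e)" .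
    then show ?thesis using Phi_pos unfolding c_def by (simp add: field_simps)
  qed
  have "(\<lambda>e. H2_normsq (fst y e) (g e) / Phi) summable_on UNIV"
    using summable_on_cmult_left[OF SH, of "1 / Phi"] by simp
  then have l2: "(\<lambda>e. (cmod (Bc y e))\<^sup>2) summable_on UNIV"
    by (rule summable_on_comparison_test) (use l2b in auto)
  show ?thesis using om dv forms l2 by blast
qed

end

context ES begin

definition Sst :: "(edge \<Rightarrow> complex) \<Rightarrow> state" where
  "Sst \<beta> = ((\<lambda>e t. \<beta> e * of_real (phi t)), (\<lambda>v. 0))"

lemma cphi_deriv: "((\<lambda>t. c * complex_of_real (phi t)) has_vector_derivative (c * of_real (dphi t))) (at t within S)"
  by (intro has_vector_derivative_mult_right has_vector_derivative_of_real phi_deriv)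
lemma cdphi_deriv: "((\<lambda>t. c * complex_of_real (dphi t)) has_vector_derivative (c * of_real (- k\<^sup>2 * phi t))) (at t within S)"
  by (intro has_vector_derivative_mult_right has_vector_derivative_of_real dphi_deriv)

lemma deriv01_cphi: "t \<in> {0..1} \<Longrightarrow> deriv01 (\<lambda>t. c * complex_of_real (phi t)) t = c * of_real (dphi t)"
  unfolding deriv01_def by (rule vector_derivative_within_closed_interval) (auto intro: cphi_deriv)

lemma H2_cphi: "H2_rep (\<lambda>t. c * complex_of_real (phi t)) (\<lambda>t. c * complex_of_real (- k\<^sup>2 * phi t))"
  unfolding H2_rep_def
proof (intro conjI ballI)
  fix t :: real assume t: "t \<in> {0..1}"
  show "((\<lambda>t. c * complex_of_real (phi t)) has_vector_derivative deriv01 (\<lambda>t. c * complex_of_real (phi t)) t) (at t within {0..1})"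
    unfolding deriv01_cphi[OF t] by (rule cphi_deriv)
  have "((\<lambda>t. c * complex_of_real (- k\<^sup>2 * phi t)) has_integral (c * of_real (dphi t) - c * of_real (dphi 0))) {0..t}"
  proof (rule fundamental_theorem_of_calculus)
    show "0 \<le> t" using t by simp
  next
    fix x assume "x \<in> {0..t}"
    show "((\<lambda>t. c * complex_of_real (dphi t)) has_vector_derivative c * complex_of_real (- k\<^sup>2 * phi x)) (at x within {0..t})"
      by (rule cdphi_deriv)
  qed
  then have "integral {0..t} (\<lambda>t. c * complex_of_real (- k\<^sup>2 * phi t)) = c * of_real (dphi t) - c * of_real (dphi 0)"
    by (rule integral_unique)
  then show "deriv01 (\<lambda>t. c * complex_of_real (phi t)) t =
      deriv01 (\<lambda>t. c * complex_of_real (phi t)) 0 + integral {0..t} (\<lambda>t. c * complex_of_real (- k\<^sup>2 * phi t))"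
    using deriv01_cphi[OF t] deriv01_cphi[of 0] by simp
next
  have co: "continuous_on {0..1} (\<lambda>t. c * complex_of_real (- k\<^sup>2 * phi t))"
    by (intro continuous_intros phi_cont)
  show "sq_int (\<lambda>t. c * complex_of_real (- k\<^sup>2 * phi t))"
    unfolding sq_int_def
  proof
    show "(\<lambda>t. c * complex_of_real (- k\<^sup>2 * phi t)) absolutely_integrable_on {0..1}"
      by (rule absolutely_integrable_continuous_real[OF co])
    show "(\<lambda>t. (cmod (c * complex_of_real (- k\<^sup>2 * phi t)))\<^sup>2) integrable_on {0..1}"
      by (intro integrable_continuous_interval continuous_intros phi_cont)
  qed
qed

definition "C2 = integral {0..1} (\<lambda>t. (phi t)\<^sup>2 + (dphi t)\<^sup>2 + (k\<^sup>2 * phi t)\<^sup>2)"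

lemma H2_normsq_cphi: "H2_normsq (\<lambda>t. c * complex_of_real (phi t)) (\<lambda>t. c * complex_of_real (- k\<^sup>2 * phi t)) = (cmod c)\<^sup>2 * C2"
proof -
  have "H2_normsq (\<lambda>t. c * complex_of_real (phi t)) (\<lambda>t. c * complex_of_real (- k\<^sup>2 * phi t)) =
      integral {0..1} (\<lambda>t. (cmod c)\<^sup>2 * ((phi t)\<^sup>2 + (dphi t)\<^sup>2 + (k\<^sup>2 * phi t)\<^sup>2))"
    unfolding H2_normsq_def
    by (rule Henstock_Kurzweil_Integration.integral_cong)
       (simp add: deriv01_cphi norm_mult power_mult_distrib algebra_simps del: of_real_mult of_real_minus of_real_power)
  also have "\<dots> = (cmod c)\<^sup>2 * C2" unfolding C2_def
    by (rule integral_mult[symmetric]) (intro integrable_continuous_interval continuous_intros phi_cont dphi_cont)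
  finally show ?thesis .
qed

lemma dnorm_Sst_A: "e \<in> incident (i, j, False) \<Longrightarrow> dnorm (fst (Sst \<beta>)) e (i, j, False) = - of_real k * \<beta> e"
  using tail_incident_A[of e i j] deriv01_cphi[of 0 "\<beta> e"]
  by (simp add: dnorm_def Sst_def dphi0)
lemma dnorm_Sst_B: "e \<in> incident (i, j, True) \<Longrightarrow> dnorm (fst (Sst \<beta>)) e (i, j, True) = of_real (k * s) * \<beta> e"
  using tail_incident_B[of e i j] deriv01_cphi[of 1 "\<beta> e"]
  by (simp add: dnorm_def Sst_def dphi1)

lemma kirch_Sst: "divfree \<beta> \<Longrightarrow> (\<Sum>e\<in>incident v. dnorm (fst (Sst \<beta>)) e v) = 0"
proof -
  assume dv: "divfree \<beta>"
  obtain i j b where v: "v = (i, j, b)" by (cases v) auto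
  have z: "(\<Sum>e\<in>incident v. \<beta> e) = 0" using dv unfolding divfree_def by blast
  show ?thesis
  proof (cases b)
    case False
    have "(\<Sum>e\<in>incident v. dnorm (fst (Sst \<beta>)) e v) = (\<Sum>e\<in>incident v. - of_real k * \<beta> e)"
      by (rule sum.cong) (use dnorm_Sst_A False in \<open>auto simp: v\<close>)
    then show ?thesis using z by (simp add: sum_negf sum_distrib_left[symmetric])
  next
    case True
    have "(\<Sum>e\<in>incident v. dnorm (fst (Sst \<beta>)) e v) = (\<Sum>e\<in>incident v. of_real (k * s) * \<beta> e)"
      by (rule sum.cong) (use dnorm_Sst_B True in \<open>auto simp: v\<close>)
    then show ?thesis using z by (simp add: sum_distrib_left[symmetric])
  qed
qed

lemma Sst_eig:
  assumes dv: "divfree \<beta>" and sm: "(\<lambda>e. (cmod (\<beta> e))\<^sup>2) summable_on UNIV"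
  shows "Sst \<beta> \<in> A0_eig a kinv m lam"
proof -
  define g where "g e t = \<beta> e * complex_of_real (- k\<^sup>2 * phi t)" for e t
  have fst_S: "fst (Sst \<beta>) e = (\<lambda>t. \<beta> e * complex_of_real (phi t))" for e by (simp add: Sst_def)
  have H: "H2_rep (fst (Sst \<beta>) e) (g e)" for e unfolding fst_S g_def by (rule H2_cphi)
  have HS: "(\<lambda>e. H2_normsq (fst (Sst \<beta>) e) (g e)) summable_on UNIV"
    unfolding fst_S g_def H2_normsq_cphi by (rule summable_on_cmult_left[OF sm])
  have rob: "vval (fst (Sst \<beta>)) e v + of_real (a * kinv) * dnorm (fst (Sst \<beta>)) e v = snd (Sst \<beta>) v"
    if "e \<in> incident v" for v e
  proof (cases "v = tailv e")
    case True
    then show ?thesis using deriv01_cphi[of 0 "\<beta> e"]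
      by (simp add: vval_def dnorm_def Sst_def phi0 dphi0 p_def rho_def algebra_simps)
  next
    case False
    then have "v = headv e" using that unfolding incident_def by auto
    then have "vval (fst (Sst \<beta>)) e v + of_real (a * kinv) * dnorm (fst (Sst \<beta>)) e v =
        \<beta> e * of_real (phi 1 + rho * dphi 1)"
      using False deriv01_cphi[of 1 "\<beta> e"] by (simp add: vval_def dnorm_def Sst_def rho_def algebra_simps)
    then show ?thesis unfolding robin1 by (simp add: Sst_def)
  qed
  have W: "A0_dom_wit a kinv m (Sst \<beta>) g"
    unfolding A0_dom_wit_def using H HS rob kirch_Sst[OF dv] by (simp add: Sst_def)
  have ae: "\<forall>e. AE t in lebesgue. t \<in> {0..1} \<longrightarrow> - of_real a * g e t = of_real lam * fst (Sst \<beta>) e t"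
  proof (intro allI AE_I2 impI)
    fix e t
    have "- of_real a * g e t = of_real (a * k\<^sup>2) * (\<beta> e * of_real (phi t))"
      unfolding g_def by (simp add: algebra_simps)
    then show "- of_real a * g e t = of_real lam * fst (Sst \<beta>) e t" unfolding a_k_sq fst_S by simp
  qed
  have km: "m > 0 \<longrightarrow> (\<forall>v. of_real (a / m) * (\<Sum>e\<in>incident v. dnorm (fst (Sst \<beta>)) e v) = of_real lam * snd (Sst \<beta>) v)"
    using kirch_Sst[OF dv] by (simp add: Sst_def)
  show ?thesis unfolding A0_eig_def using W ae km by blast
qed

end

lemma cmod_expand: "(cmod (z - g * complex_of_real r))\<^sup>2 = (cmod z)\<^sup>2 - 2 * Re (cnj g * (z * of_real r)) + (cmod g)\<^sup>2 * r\<^sup>2"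
  unfolding cmod_power2 by (simp add: power2_eq_square algebra_simps)

lemma pyth_alg: "(X::real) - 2 * (R * P) + G * P = (X - 2 * (Q * P) + Q * P) + (Q - 2 * R + G) * P"
  by (simp add: algebra_simps)

context ES begin

definition proj :: "(real \<Rightarrow> complex) \<Rightarrow> complex" where
  "proj u = integral {0..1} (\<lambda>t. u t * of_real (phi t)) / of_real Phi"

lemma uphi_int:
  assumes "sq_int u"
  shows "(\<lambda>t. u t * of_real (phi t)) integrable_on {0..1}"
proof -
  have ua: "u absolutely_integrable_on {0..1}" using assms unfolding sq_int_def by blast
  have m: "(\<lambda>t. complex_of_real (phi t)) \<in> borel_measurable (lebesgue_on {0..1})"
    by (rule continuous_imp_measurable_on_sets_lebesgue) (auto intro!: continuous_intros phi_cont)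
  have b: "bounded ((\<lambda>t. complex_of_real (phi t)) ` {0..1})"
    by (rule compact_imp_bounded, rule compact_continuous_image) (auto intro!: continuous_intros phi_cont)
  have "(\<lambda>t. complex_of_real (phi t) * u t) absolutely_integrable_on {0..1}"
    by (rule absolutely_integrable_bounded_measurable_product[OF bilinear_times m _ b ua]) simp
  then have "(\<lambda>t. complex_of_real (phi t) * u t) integrable_on {0..1}"
    using set_lebesgue_integral_eq_integral(1) by blast
  then show ?thesis by (simp add: mult.commute)
qed

lemma sq_expand_int:
  assumes su: "sq_int u"
  shows "((\<lambda>t. (cmod (u t - g * of_real (phi t)))\<^sup>2) has_integral
      (integral {0..1} (\<lambda>t. (cmod (u t))\<^sup>2) - 2 * Re (cnj g * integral {0..1} (\<lambda>t. u t * of_real (phi t))) + (cmod g)\<^sup>2 * Phi)) {0..1}"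
proof -
  have i1: "((\<lambda>t. (cmod (u t))\<^sup>2) has_integral integral {0..1} (\<lambda>t. (cmod (u t))\<^sup>2)) {0..1}"
    using su unfolding sq_int_def by (simp add: has_integral_integral)
  have i0: "((\<lambda>t. u t * of_real (phi t)) has_integral integral {0..1} (\<lambda>t. u t * of_real (phi t))) {0..1}"
    using uphi_int[OF su] by (simp add: has_integral_integral)
  have i2: "((\<lambda>t. Re (cnj g * (u t * of_real (phi t)))) has_integral Re (cnj g * integral {0..1} (\<lambda>t. u t * of_real (phi t)))) {0..1}"
    using has_integral_linear[OF has_integral_mult_right[OF i0, of "cnj g"] bounded_linear_Re]
    by (simp add: o_def)
  have i3: "((\<lambda>t. (cmod g)\<^sup>2 * (phi t)\<^sup>2) has_integral (cmod g)\<^sup>2 * Phi) {0..1}"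
    unfolding Phi_def using has_integral_mult_right[OF integrable_integral[OF phi_int]] by simp
  have "((\<lambda>t. (cmod (u t))\<^sup>2 - 2 * Re (cnj g * (u t * of_real (phi t))) + (cmod g)\<^sup>2 * (phi t)\<^sup>2) has_integral
      (integral {0..1} (\<lambda>t. (cmod (u t))\<^sup>2) - 2 * Re (cnj g * integral {0..1} (\<lambda>t. u t * of_real (phi t))) + (cmod g)\<^sup>2 * Phi)) {0..1}"
    by (intro has_integral_add has_integral_diff i1 i3 has_integral_mult_right i2)
  then show ?thesis unfolding cmod_expand .
qed

lemma pyth:
  assumes su: "sq_int u"
  shows "(\<lambda>t. (cmod (u t - g * of_real (phi t)))\<^sup>2) integrable_on {0..1}"
    and "integral {0..1} (\<lambda>t. (cmod (u t - g * of_real (phi t)))\<^sup>2) =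
         integral {0..1} (\<lambda>t. (cmod (u t - proj u * of_real (phi t)))\<^sup>2) + (cmod (proj u - g))\<^sup>2 * Phi"
proof -
  show "(\<lambda>t. (cmod (u t - g * of_real (phi t)))\<^sup>2) integrable_on {0..1}"
    using sq_expand_int[OF su] by blast
  define I where "I = integral {0..1} (\<lambda>t. u t * of_real (phi t))"
  define A where "A = integral {0..1} (\<lambda>t. (cmod (u t))\<^sup>2)"
  have Pp: "Phi > 0" by (rule Phi_pos)
  have I: "I = proj u * of_real Phi" unfolding proj_def I_def using Pp by simp
  have e1: "integral {0..1} (\<lambda>t. (cmod (u t - g * of_real (phi t)))\<^sup>2) = A - 2 * Re (cnj g * I) + (cmod g)\<^sup>2 * Phi"
    using sq_expand_int[OF su, of g] unfolding A_def I_def by (rule integral_unique)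
  have e2: "integral {0..1} (\<lambda>t. (cmod (u t - proj u * of_real (phi t)))\<^sup>2) = A - 2 * Re (cnj (proj u) * I) + (cmod (proj u))\<^sup>2 * Phi"
    using sq_expand_int[OF su, of "proj u"] unfolding A_def I_def by (rule integral_unique)
  have h1: "Re (cnj g * I) = Re (cnj g * proj u) * Phi" unfolding I by (simp add: algebra_simps)
  have h2: "Re (cnj (proj u) * I) = (cmod (proj u))\<^sup>2 * Phi"
    unfolding I cmod_power2 by (simp add: power2_eq_square algebra_simps)
  have h3: "(cmod (proj u - g))\<^sup>2 = (cmod (proj u))\<^sup>2 - 2 * Re (cnj g * proj u) + (cmod g)\<^sup>2"
    unfolding cmod_power2 by (simp add: power2_eq_square algebra_simps)
  show "integral {0..1} (\<lambda>t. (cmod (u t - g * of_real (phi t)))\<^sup>2) =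
         integral {0..1} (\<lambda>t. (cmod (u t - proj u * of_real (phi t)))\<^sup>2) + (cmod (proj u - g))\<^sup>2 * Phi"
    unfolding e1 e2 h1 h2 h3 by (rule pyth_alg)
qed

lemma pyth_ge:
  assumes su: "sq_int u"
  shows "(cmod (proj u - g))\<^sup>2 * Phi \<le> integral {0..1} (\<lambda>t. (cmod (u t - g * of_real (phi t)))\<^sup>2)"
    and "integral {0..1} (\<lambda>t. (cmod (u t - proj u * of_real (phi t)))\<^sup>2) \<le> integral {0..1} (\<lambda>t. (cmod (u t - g * of_real (phi t)))\<^sup>2)"
proof -
  have "integral {0..1} (\<lambda>t. (cmod (u t - proj u * of_real (phi t)))\<^sup>2) \<ge> 0"
    by (rule integral_nonneg) (use pyth(1)[OF su] in auto)
  moreover have "(cmod (proj u - g))\<^sup>2 * Phi \<ge> 0" using Phi_pos by simp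
  ultimately show "(cmod (proj u - g))\<^sup>2 * Phi \<le> integral {0..1} (\<lambda>t. (cmod (u t - g * of_real (phi t)))\<^sup>2)"
    and "integral {0..1} (\<lambda>t. (cmod (u t - proj u * of_real (phi t)))\<^sup>2) \<le> integral {0..1} (\<lambda>t. (cmod (u t - g * of_real (phi t)))\<^sup>2)"
    using pyth(2)[OF su, of g] by linarith+
qed

end

lemma hp_ne_hm: "hp e \<noteq> hm e"
proof -
  obtain i j d where e: "e = (i, j, d)" by (cases e) auto
  show ?thesis unfolding e by (cases d) auto
qed

lemma finite_hexagon: "finite (hexagon h)"
  by (cases h) (simp add: hexagon_def)

definition ind :: "int \<times> int \<Rightarrow> int \<times> int \<Rightarrow> complex" where "ind h p = (if p = h then 1 else 0)"

lemma curl_ind_supp: "curl (ind h) e \<noteq> 0 \<Longrightarrow> e \<in> hexagon h"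
proof (rule ccontr)
  assume a: "curl (ind h) e \<noteq> 0" "e \<notin> hexagon h"
  then have "hp e \<noteq> h" "hm e \<noteq> h" using not_in_hexagon by auto
  then have "curl (ind h) e = 0" by (simp add: curl_def ind_def)
  with a show False by simp
qed

lemma curl_sum_ind:
  assumes "finite H" "\<And>h. h \<notin> H \<Longrightarrow> \<psi> h = 0"
  shows "(\<Sum>h\<in>H. \<psi> h * curl (ind h) e) = curl \<psi> e"
proof -
  have d: "(\<Sum>h\<in>H. \<psi> h * ind h x) = \<psi> x" for x
  proof -
    have "(\<Sum>h\<in>H. \<psi> h * ind h x) = (\<Sum>h\<in>H. if x = h then \<psi> h else 0)"
      by (rule sum.cong) (auto simp: ind_def)
    also have "\<dots> = (if x \<in> H then \<psi> x else 0)" using assms(1) by (simp add: sum.delta)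
    also have "\<dots> = \<psi> x" using assms(2) by auto
    finally show ?thesis .
  qed
  show ?thesis unfolding curl_def by (simp add: right_diff_distrib sum_subtractf d)
qed

context ES begin

definition Lst :: "int \<times> int \<Rightarrow> state" where "Lst h = Sst (curl (ind h))"

lemma fin_supp_summable: "finite {e. \<beta> e \<noteq> 0} \<Longrightarrow> (\<lambda>e. (cmod (\<beta> e))\<^sup>2) summable_on UNIV"
  by (rule finite_nonzero_values_imp_summable_on) (auto elim: finite_subset[rotated])

lemma Lst_loop: "Lst h \<in> loop_states a kinv m lam"
proof -
  have fs: "finite {e. curl (ind h) e \<noteq> 0}"
    by (rule finite_subset[OF _ finite_hexagon[of h]]) (use curl_ind_supp in blast)
  have "Lst h \<in> A0_eig a kinv m lam" unfolding Lst_def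
    by (rule Sst_eig[OF divfree_curl fin_supp_summable[OF fs]])
  moreover have "\<forall>v. snd (Lst h) v = 0" by (simp add: Lst_def Sst_def)
  moreover have "\<forall>e. e \<notin> hexagon h \<longrightarrow> (\<forall>t\<in>{0..1}. fst (Lst h) e t = 0)"
  proof (intro allI impI ballI)
    fix e t assume "e \<notin> hexagon h"
    then have "curl (ind h) e = 0" using curl_ind_supp by blast
    then show "fst (Lst h) e t = 0" by (simp add: Lst_def Sst_def)
  qed
  ultimately show ?thesis unfolding loop_states_def by blast
qed

lemma Lst_inj: "inj Lst"
proof (rule injI)
  fix h h' assume eq: "Lst h = Lst h'"
  obtain t where t: "t \<in> {0..1}" "phi t \<noteq> 0" using phi_nonzero by blast
  define e where "e = eo (h, D0)"
  have he: "hp e = h" unfolding e_def by (rule hp_eo)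
  have "fst (Lst h) e t = fst (Lst h') e t" using eq by simp
  then have "curl (ind h) e = curl (ind h') e" using t(2) by (simp add: Lst_def Sst_def)
  moreover have "curl (ind h) e = 1" using hp_ne_hm[of e] he by (auto simp: curl_def ind_def)
  ultimately have "curl (ind h') e = 1" by simp
  then show "h = h'" using he by (auto simp: curl_def ind_def split: if_splits)
qed

lemma lincomb_Lst:
  assumes fin: "finite {h. \<psi> h \<noteq> 0}"
  defines "H \<equiv> {h. \<psi> h \<noteq> 0}"
  defines "c \<equiv> (\<lambda>f. \<psi> (inv_into H Lst f))"
  shows "fst (lincomb (Lst ` H) c) e t = curl \<psi> e * of_real (phi t)"
    and "snd (lincomb (Lst ` H) c) v = 0"
proof -
  have inj: "inj_on Lst H" using Lst_inj by (auto simp: inj_on_def inj_def)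
  have "fst (lincomb (Lst ` H) c) e t = (\<Sum>f\<in>Lst ` H. c f * fst f e t)" by (simp add: lincomb_def)
  also have "\<dots> = (\<Sum>h\<in>H. c (Lst h) * fst (Lst h) e t)" by (rule sum.reindex[OF inj, unfolded o_def])
  also have "\<dots> = (\<Sum>h\<in>H. \<psi> h * curl (ind h) e) * of_real (phi t)"
    unfolding sum_distrib_right
  proof (rule sum.cong)
    fix h assume h: "h \<in> H"
    have "c (Lst h) = \<psi> h" unfolding c_def using inv_into_f_f[OF inj h] by simp
    then show "c (Lst h) * fst (Lst h) e t = \<psi> h * curl (ind h) e * of_real (phi t)"
      by (simp add: Lst_def Sst_def)
  qed simp
  also have "(\<Sum>h\<in>H. \<psi> h * curl (ind h) e) = curl \<psi> e"
    by (rule curl_sum_ind) (use fin in \<open>auto simp: H_def\<close>)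
  finally show "fst (lincomb (Lst ` H) c) e t = curl \<psi> e * of_real (phi t)" .
  have "\<And>f. f \<in> Lst ` H \<Longrightarrow> snd f v = 0" by (auto simp: Lst_def Sst_def)
  then show "snd (lincomb (Lst ` H) c) v = 0" by (simp add: lincomb_def)
qed

end

lemma cmod_diff_sq: "(cmod (a - b))\<^sup>2 \<le> 2 * (cmod a)\<^sup>2 + 2 * (cmod b)\<^sup>2"
proof -
  have "cmod (a - b) \<le> cmod a + cmod b" by (rule norm_triangle_ineq4)
  then have "(cmod (a - b))\<^sup>2 \<le> (cmod a + cmod b)\<^sup>2" by (intro power_mono) auto
  also have "\<dots> \<le> 2 * (cmod a)\<^sup>2 + 2 * (cmod b)\<^sup>2"
    using sum_squares_ge_zero[of "cmod a - cmod b" 0] by (simp add: power2_eq_square algebra_simps)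
  finally show ?thesis .
qed

lemma fst_sdiff: "fst (sdiff x y) e t = fst x e t - fst y e t" by (simp add: sdiff_def)
lemma snd_sdiff: "snd (sdiff x y) v = snd x v - snd y v" by (simp add: sdiff_def)

context ES begin

lemma proj_bounds:
  assumes su: "sq_int u"
  shows "integral {0..1} (\<lambda>t. (cmod (u t - proj u * of_real (phi t)))\<^sup>2) \<le> integral {0..1} (\<lambda>t. (cmod (u t))\<^sup>2)"
    and "(cmod (proj u))\<^sup>2 * Phi \<le> integral {0..1} (\<lambda>t. (cmod (u t))\<^sup>2)"
    and "integral {0..1} (\<lambda>t. (cmod (u t - proj u * of_real (phi t)))\<^sup>2) \<ge> 0"
  using pyth_ge[OF su, of 0] pyth(1)[OF su, of "proj u"]
  by (auto intro: integral_nonneg)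

lemma T_bound:
  assumes su: "sq_int u"
  shows "integral {0..1} (\<lambda>t. (cmod (u t - g * of_real (phi t)))\<^sup>2) \<le>
      3 * integral {0..1} (\<lambda>t. (cmod (u t))\<^sup>2) + 2 * (cmod g)\<^sup>2 * Phi"
proof -
  have e: "integral {0..1} (\<lambda>t. (cmod (u t - g * of_real (phi t)))\<^sup>2) =
      integral {0..1} (\<lambda>t. (cmod (u t - proj u * of_real (phi t)))\<^sup>2) + (cmod (proj u - g))\<^sup>2 * Phi"
    by (rule pyth(2)[OF su])
  have "(cmod (proj u - g))\<^sup>2 * Phi \<le> (2 * (cmod (proj u))\<^sup>2 + 2 * (cmod g)\<^sup>2) * Phi"
    using Phi_pos cmod_diff_sq[of "proj u" g] by (intro mult_right_mono) auto
  then show ?thesis using e proj_bounds[OF su] by (simp add: algebra_simps)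
qed

lemma back_dir:
  assumes xH: "in_H x" and y: "y \<in> A0_eig a kinv m lam" and z: "hnormsq m (sdiff x y) = 0"
  shows "in_cspan m (loop_states a kinv m lam) x"
proof -
  have sx: "\<And>e. sq_int (fst x e)"
   and sl2: "(\<lambda>e. integral {0..1} (\<lambda>t. (cmod (fst x e t))\<^sup>2)) summable_on UNIV"
   and sv: "(\<lambda>v. (cmod (snd x v))\<^sup>2) summable_on UNIV"
    using xH unfolding in_H_def by blast+
  define \<beta> where "\<beta> = Bc y"
  have om: "\<And>v. snd y v = 0" and dv: "divfree \<beta>"
   and fm: "\<And>e t. t \<in> {0..1} \<Longrightarrow> fst y e t = \<beta> e * of_real (phi t)"
   and l2: "(\<lambda>e. (cmod (\<beta> e))\<^sup>2) summable_on UNIV"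
    using eig_structure[OF y] unfolding \<beta>_def by blast+
  define \<pi> where "\<pi> e = proj (fst x e)" for e
  define R where "R e = integral {0..1} (\<lambda>t. (cmod (fst x e t - \<pi> e * of_real (phi t)))\<^sup>2)" for e
  have Tg: "integral {0..1} (\<lambda>t. (cmod (fst x e t - g * of_real (phi t)))\<^sup>2) = R e + (cmod (\<pi> e - g))\<^sup>2 * Phi" for e g
    unfolding R_def \<pi>_def by (rule pyth(2)[OF sx])
  define T where "T e = integral {0..1} (\<lambda>t. (cmod (fst (sdiff x y) e t))\<^sup>2)" for e
  have T: "T e = R e + (cmod (\<pi> e - \<beta> e))\<^sup>2 * Phi" for e
  proof -
    have "T e = integral {0..1} (\<lambda>t. (cmod (fst x e t - \<beta> e * of_real (phi t)))\<^sup>2)"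
      unfolding T_def fst_sdiff by (rule Henstock_Kurzweil_Integration.integral_cong) (simp add: fm)
    then show ?thesis using Tg by simp
  qed
  have R0: "R e \<ge> 0" for e unfolding R_def \<pi>_def using proj_bounds(3)[OF sx] .
  have Tnn: "T e \<ge> 0" for e using R0[of e] Phi_pos unfolding T by simp
  have Tb: "T e \<le> 3 * integral {0..1} (\<lambda>t. (cmod (fst x e t))\<^sup>2) + 2 * (cmod (\<beta> e))\<^sup>2 * Phi" for e
  proof -
    have "T e = integral {0..1} (\<lambda>t. (cmod (fst x e t - \<beta> e * of_real (phi t)))\<^sup>2)"
      using T Tg by simp
    then show ?thesis using T_bound[OF sx] by simp
  qed
  have sT: "T summable_on UNIV"
  proof (rule summable_on_comparison_test)
    show "(\<lambda>e. 3 * integral {0..1} (\<lambda>t. (cmod (fst x e t))\<^sup>2) + 2 * (cmod (\<beta> e))\<^sup>2 * Phi) summable_on UNIV"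
      by (intro summable_on_add summable_on_cmult_right summable_on_cmult_left sl2 l2)
  qed (use Tb Tnn in auto)
  define V where "V = infsum (\<lambda>v. (cmod (snd x v))\<^sup>2) UNIV"
  have V0: "V \<ge> 0" unfolding V_def by (rule infsum_nonneg) simp
  have hz: "infsum T UNIV + m * V = 0"
    using z unfolding hnormsq_def T_def V_def snd_sdiff om by simp
  have iT: "infsum T UNIV \<ge> 0" by (rule infsum_nonneg) (use Tnn in auto)
  have mV: "m * V \<ge> 0" using m_nn V0 by simp
  have iT0: "infsum T UNIV = 0" and mV0: "m * V = 0" using hz iT mV by linarith+
  have T0: "T e = 0" for e
    using nonneg_infsum_le_0D[of T UNIV e] iT0 sT Tnn by simp
  have R00: "R e = 0" and pb: "\<pi> e = \<beta> e" for e
  proof -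
    have "R e + (cmod (\<pi> e - \<beta> e))\<^sup>2 * Phi = 0" using T0[of e] T[of e] by simp
    moreover have "(cmod (\<pi> e - \<beta> e))\<^sup>2 * Phi \<ge> 0" using Phi_pos by simp
    ultimately have "R e = 0" "(cmod (\<pi> e - \<beta> e))\<^sup>2 * Phi = 0" using R0[of e] by linarith+
    then show "R e = 0" "\<pi> e = \<beta> e" using Phi_pos by auto
  qed
  show ?thesis unfolding in_cspan_def
  proof (intro allI impI)
    fix \<epsilon> :: real assume eps: "\<epsilon> > 0"
    obtain \<psi> where fin: "finite {h. \<psi> h \<noteq> 0}"
      and sm: "(\<lambda>e. (cmod (\<beta> e - curl \<psi> e))\<^sup>2) summable_on UNIV"
      and sml: "infsum (\<lambda>e. (cmod (\<beta> e - curl \<psi> e))\<^sup>2) UNIV < \<epsilon> / Phi"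
      using flow_approx[OF dv l2, of "\<epsilon> / Phi"] eps Phi_pos by auto
    define H where "H = {h. \<psi> h \<noteq> 0}"
    define c where "c = (\<lambda>f. \<psi> (inv_into H Lst f))"
    define L where "L = lincomb (Lst ` H) c"
    have Lf: "fst L e t = curl \<psi> e * of_real (phi t)" for e t
      unfolding L_def H_def c_def by (rule lincomb_Lst(1)[OF fin])
    have Ls: "snd L v = 0" for v
      unfolding L_def H_def c_def by (rule lincomb_Lst(2)[OF fin])
    have "hnormsq m (sdiff x L) = infsum (\<lambda>e. (cmod (\<beta> e - curl \<psi> e))\<^sup>2 * Phi) UNIV + m * V"
    proof -
      have "(\<lambda>e. integral {0..1} (\<lambda>t. (cmod (fst (sdiff x L) e t))\<^sup>2)) = (\<lambda>e. (cmod (\<beta> e - curl \<psi> e))\<^sup>2 * Phi)"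
      proof
        fix e
        have "integral {0..1} (\<lambda>t. (cmod (fst (sdiff x L) e t))\<^sup>2) = R e + (cmod (\<pi> e - curl \<psi> e))\<^sup>2 * Phi"
          unfolding fst_sdiff Lf by (rule Tg)
        then show "integral {0..1} (\<lambda>t. (cmod (fst (sdiff x L) e t))\<^sup>2) = (cmod (\<beta> e - curl \<psi> e))\<^sup>2 * Phi"
          using R00 pb by simp
      qed
      then show ?thesis unfolding hnormsq_def V_def snd_sdiff Ls by simp
    qed
    also have "\<dots> = infsum (\<lambda>e. (cmod (\<beta> e - curl \<psi> e))\<^sup>2) UNIV * Phi"
      using mV0 by (simp add: infsum_cmult_left[OF sm])
    also have "\<dots> < \<epsilon>" using sml Phi_pos by (simp add: pos_less_divide_eq)
    finally have "hnormsq m (sdiff x L) < \<epsilon>" .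
    moreover have "finite (Lst ` H)" using fin unfolding H_def by simp
    moreover have "Lst ` H \<subseteq> loop_states a kinv m lam" using Lst_loop by auto
    ultimately show "\<exists>F c. finite F \<and> F \<subseteq> loop_states a kinv m lam \<and> hnormsq m (sdiff x (lincomb F c)) < \<epsilon>"
      unfolding L_def by blast
  qed
qed

end

lemma card3: "card {x, y, z} \<le> 3"
  by (simp add: card_insert_if)

lemma card_incident: "card (incident v) \<le> 3"
proof -
  obtain i j b where v: "v = (i, j, b)" by (cases v) auto
  show ?thesis unfolding v by (cases b) (simp_all only: incident_A incident_B card3)
qed

lemma single_le_infsum:
  fixes f :: "'a \<Rightarrow> real"
  assumes "f summable_on UNIV" "\<And>x. f x \<ge> 0"
  shows "f x \<le> infsum f UNIV"
  using finite_sum_le_infsum[of f UNIV "{x}"] assms by simp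

context ES begin

lemma approx_data:
  assumes xH: "in_H x" and cs: "in_cspan m (loop_states a kinv m lam) x" and eps: "\<epsilon> > 0"
  shows "\<exists>\<gamma>. divfree \<gamma> \<and>
     (\<lambda>e. integral {0..1} (\<lambda>t. (cmod (fst x e t - \<gamma> e * of_real (phi t)))\<^sup>2)) summable_on UNIV \<and>
     infsum (\<lambda>e. integral {0..1} (\<lambda>t. (cmod (fst x e t - \<gamma> e * of_real (phi t)))\<^sup>2)) UNIV < \<epsilon> \<and>
     m * infsum (\<lambda>v. (cmod (snd x v))\<^sup>2) UNIV < \<epsilon>"
proof -
  have sx: "\<And>e. sq_int (fst x e)"
   and sl2: "(\<lambda>e. integral {0..1} (\<lambda>t. (cmod (fst x e t))\<^sup>2)) summable_on UNIV"
    using xH unfolding in_H_def by blast+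
  obtain F c where F: "finite F" "F \<subseteq> loop_states a kinv m lam"
    and hn: "hnormsq m (sdiff x (lincomb F c)) < \<epsilon>"
    using cs eps unfolding in_cspan_def by blast
  have Fe: "f \<in> A0_eig a kinv m lam" if "f \<in> F" for f using F(2) that unfolding loop_states_def by blast
  have Fh: "\<exists>h. \<forall>e. e \<notin> hexagon h \<longrightarrow> (\<forall>t\<in>{0..1}. fst f e t = 0)" if "f \<in> F" for f
    using F(2) that unfolding loop_states_def by blast
  obtain t0 where t0: "t0 \<in> {0..1}" "phi t0 \<noteq> 0" using phi_nonzero by blast
  define hf where "hf f = (SOME h. \<forall>e. e \<notin> hexagon h \<longrightarrow> (\<forall>t\<in>{0..1::real}. fst f e t = 0))" for f :: state
  have hfp: "\<forall>e. e \<notin> hexagon (hf f) \<longrightarrow> (\<forall>t\<in>{0..1}. fst f e t = 0)" if "f \<in> F" for f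
    unfolding hf_def using someI_ex[OF Fh[OF that]] .
  have stf: "(\<forall>v. snd f v = 0) \<and> divfree (Bc f) \<and>
    (\<forall>e. \<forall>t\<in>{0..1}. fst f e t = Bc f e * of_real (phi t) \<and> deriv01 (fst f e) t = Bc f e * of_real (dphi t))"
    if "f \<in> F" for f using eig_structure[OF Fe[OF that]] by blast
  have Bz: "Bc f e = 0" if "f \<in> F" "e \<notin> hexagon (hf f)" for f e
  proof -
    have "fst f e t0 = 0" using hfp[OF that(1)] that(2) t0(1) by blast
    moreover have "fst f e t0 = Bc f e * of_real (phi t0)" using stf[OF that(1)] t0(1) by blast
    ultimately show ?thesis using t0(2) by simp
  qed
  define \<gamma> where "\<gamma> e = (\<Sum>f\<in>F. c f * Bc f e)" for e
  have Lf: "fst (lincomb F c) e t = \<gamma> e * of_real (phi t)" if "t \<in> {0..1}" for e t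
  proof -
    have "fst (lincomb F c) e t = (\<Sum>f\<in>F. c f * fst f e t)" by (simp add: lincomb_def)
    also have "\<dots> = (\<Sum>f\<in>F. c f * Bc f e * of_real (phi t))"
    proof (rule sum.cong)
      fix f assume "f \<in> F"
      then have "fst f e t = Bc f e * of_real (phi t)" using stf that by blast
      then show "c f * fst f e t = c f * Bc f e * of_real (phi t)" by simp
    qed simp
    finally show ?thesis unfolding \<gamma>_def by (simp add: sum_distrib_right)
  qed
  have Ls: "snd (lincomb F c) v = 0" for v
  proof -
    have "\<And>f. f \<in> F \<Longrightarrow> snd f v = 0" using stf by blast
    then show ?thesis by (simp add: lincomb_def)
  qed
  have dg: "divfree \<gamma>" unfolding divfree_def
  proof
    fix v
    have "(\<Sum>e\<in>incident v. \<gamma> e) = (\<Sum>f\<in>F. c f * (\<Sum>e\<in>incident v. Bc f e))"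
      unfolding \<gamma>_def by (simp add: sum_distrib_left sum.swap[of _ F])
    also have "\<dots> = 0"
    proof -
      have "\<And>f. f \<in> F \<Longrightarrow> (\<Sum>e\<in>incident v. Bc f e) = 0" using stf unfolding divfree_def by blast
      then show ?thesis by simp
    qed
    finally show "(\<Sum>e\<in>incident v. \<gamma> e) = 0" .
  qed
  have fg: "finite {e. \<gamma> e \<noteq> 0}"
  proof (rule finite_subset)
    show "{e. \<gamma> e \<noteq> 0} \<subseteq> (\<Union>f\<in>F. hexagon (hf f))"
    proof
      fix e assume "e \<in> {e. \<gamma> e \<noteq> 0}"
      then obtain f where "f \<in> F" "c f * Bc f e \<noteq> 0" unfolding \<gamma>_def
        by (metis (mono_tags, lifting) mem_Collect_eq sum.neutral)
      then have "e \<in> hexagon (hf f)" using Bz[of f e] by auto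
      with \<open>f \<in> F\<close> show "e \<in> (\<Union>f\<in>F. hexagon (hf f))" by blast
    qed
    show "finite (\<Union>f\<in>F. hexagon (hf f))" using F(1) finite_hexagon by blast
  qed
  define T where "T e = integral {0..1} (\<lambda>t. (cmod (fst x e t - \<gamma> e * of_real (phi t)))\<^sup>2)" for e
  have Tnn: "T e \<ge> 0" for e
    unfolding T_def by (rule integral_nonneg) (use pyth(1)[OF sx] in auto)
  have sT: "T summable_on UNIV"
  proof (rule summable_on_comparison_test)
    show "(\<lambda>e. 3 * integral {0..1} (\<lambda>t. (cmod (fst x e t))\<^sup>2) + 2 * (cmod (\<gamma> e))\<^sup>2 * Phi) summable_on UNIV"
      by (intro summable_on_add summable_on_cmult_right summable_on_cmult_left sl2 fin_supp_summable fg)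
  qed (use T_bound[OF sx] Tnn in \<open>auto simp: T_def\<close>)
  define V where "V = infsum (\<lambda>v. (cmod (snd x v))\<^sup>2) UNIV"
  have V0: "V \<ge> 0" unfolding V_def by (rule infsum_nonneg) simp
  have "hnormsq m (sdiff x (lincomb F c)) = infsum T UNIV + m * V"
  proof -
    have "(\<lambda>e. integral {0..1} (\<lambda>t. (cmod (fst (sdiff x (lincomb F c)) e t))\<^sup>2)) = T"
    proof
      fix e show "integral {0..1} (\<lambda>t. (cmod (fst (sdiff x (lincomb F c)) e t))\<^sup>2) = T e"
        unfolding T_def fst_sdiff by (rule Henstock_Kurzweil_Integration.integral_cong) (simp add: Lf)
    qed
    then show ?thesis unfolding hnormsq_def V_def snd_sdiff Ls by simp
  qed
  moreover have "infsum T UNIV \<ge> 0" by (rule infsum_nonneg) (use Tnn in auto)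
  moreover have "m * V \<ge> 0" using m_nn V0 by simp
  ultimately have "infsum T UNIV < \<epsilon>" "m * V < \<epsilon>" using hn by linarith+
  then show ?thesis using dg sT unfolding T_def V_def by blast
qed

lemma fwd_dir:
  assumes xH: "in_H x" and cs: "in_cspan m (loop_states a kinv m lam) x"
  shows "\<exists>y\<in>A0_eig a kinv m lam. hnormsq m (sdiff x y) = 0"
proof -
  have sx: "\<And>e. sq_int (fst x e)"
   and sl2: "(\<lambda>e. integral {0..1} (\<lambda>t. (cmod (fst x e t))\<^sup>2)) summable_on UNIV"
    using xH unfolding in_H_def by blast+
  define \<pi> where "\<pi> e = proj (fst x e)" for e
  define R where "R e = integral {0..1} (\<lambda>t. (cmod (fst x e t - \<pi> e * of_real (phi t)))\<^sup>2)" for e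
  define V where "V = infsum (\<lambda>v. (cmod (snd x v))\<^sup>2) UNIV"
  have V0: "V \<ge> 0" unfolding V_def by (rule infsum_nonneg) simp
  have R0: "R e \<ge> 0" for e unfolding R_def \<pi>_def using proj_bounds(3)[OF sx] .
  have sR: "R summable_on UNIV"
    by (rule summable_on_comparison_test[OF sl2]) (use R0 proj_bounds(1)[OF sx] in \<open>auto simp: R_def \<pi>_def\<close>)
  have l2: "(\<lambda>e. (cmod (\<pi> e))\<^sup>2) summable_on UNIV"
  proof (rule summable_on_comparison_test)
    show "(\<lambda>e. integral {0..1} (\<lambda>t. (cmod (fst x e t))\<^sup>2) * (1 / Phi)) summable_on UNIV"
      by (rule summable_on_cmult_left[OF sl2])
    show "(cmod (\<pi> e))\<^sup>2 \<le> integral {0..1} (\<lambda>t. (cmod (fst x e t))\<^sup>2) * (1 / Phi)" for e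
      using proj_bounds(2)[OF sx, of e] Phi_pos unfolding \<pi>_def by (simp add: field_simps)
  qed simp
  have key: "infsum R UNIV < \<epsilon> \<and> m * V < \<epsilon> \<and> (\<forall>v. cmod (\<Sum>e\<in>incident v. \<pi> e) \<le> 3 * sqrt (\<epsilon> / Phi))"
    if eps: "\<epsilon> > 0" for \<epsilon>
  proof -
    obtain \<gamma> where dg: "divfree \<gamma>"
      and sT: "(\<lambda>e. integral {0..1} (\<lambda>t. (cmod (fst x e t - \<gamma> e * of_real (phi t)))\<^sup>2)) summable_on UNIV"
      and iT: "infsum (\<lambda>e. integral {0..1} (\<lambda>t. (cmod (fst x e t - \<gamma> e * of_real (phi t)))\<^sup>2)) UNIV < \<epsilon>"
      and mV: "m * V < \<epsilon>"
      using approx_data[OF xH cs eps] unfolding V_def by blast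
    define T where "T e = integral {0..1} (\<lambda>t. (cmod (fst x e t - \<gamma> e * of_real (phi t)))\<^sup>2)" for e
    have TR: "T e = R e + (cmod (\<pi> e - \<gamma> e))\<^sup>2 * Phi" for e
      unfolding T_def R_def \<pi>_def by (rule pyth(2)[OF sx])
    have Tnn: "T e \<ge> 0" for e using TR R0 Phi_pos by (simp add: add_nonneg_nonneg)
    have "infsum R UNIV \<le> infsum T UNIV"
      by (rule infsum_mono[OF sR sT[folded T_def]]) (use TR Phi_pos in simp)
    then have r: "infsum R UNIV < \<epsilon>" using iT unfolding T_def by simp
    have d: "cmod (\<Sum>e\<in>incident v. \<pi> e) \<le> 3 * sqrt (\<epsilon> / Phi)" for v
    proof -
      have each: "cmod (\<pi> e - \<gamma> e) \<le> sqrt (\<epsilon> / Phi)" for e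
      proof -
        have "(cmod (\<pi> e - \<gamma> e))\<^sup>2 * Phi \<le> T e" using TR R0 by simp
        also have "T e \<le> infsum T UNIV" by (rule single_le_infsum[OF sT[folded T_def] Tnn])
        finally have "(cmod (\<pi> e - \<gamma> e))\<^sup>2 * Phi \<le> \<epsilon>" using iT unfolding T_def by simp
        then have "(cmod (\<pi> e - \<gamma> e))\<^sup>2 \<le> \<epsilon> / Phi" using Phi_pos by (simp add: field_simps)
        then show ?thesis by (simp add: real_le_rsqrt)
      qed
      have "(\<Sum>e\<in>incident v. \<gamma> e) = 0" using dg unfolding divfree_def by blast
      then have "(\<Sum>e\<in>incident v. \<pi> e) = (\<Sum>e\<in>incident v. \<pi> e - \<gamma> e)" by (simp add: sum_subtractf)
      then have "cmod (\<Sum>e\<in>incident v. \<pi> e) \<le> (\<Sum>e\<in>incident v. cmod (\<pi> e - \<gamma> e))"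
        by (simp add: norm_sum)
      also have "\<dots> \<le> real (card (incident v)) * sqrt (\<epsilon> / Phi)"
        using sum_bounded_above[of "incident v" "\<lambda>e. cmod (\<pi> e - \<gamma> e)" "sqrt (\<epsilon> / Phi)"] each by simp
      also have "\<dots> \<le> 3 * sqrt (\<epsilon> / Phi)"
        using card_incident[of v] Phi_pos eps by (intro mult_right_mono) auto
      finally show ?thesis .
    qed
    show ?thesis using r mV d by blast
  qed
  have iR: "infsum R UNIV = 0"
  proof -
    have "infsum R UNIV \<le> 0"
    proof (rule ccontr)
      assume "\<not> infsum R UNIV \<le> 0"
      then show False using key[of "infsum R UNIV"] by simp
    qed
    moreover have "infsum R UNIV \<ge> 0" by (rule infsum_nonneg) (use R0 in auto)
    ultimately show ?thesis by simp
  qed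
  have mV: "m * V = 0"
  proof -
    have "m * V \<le> 0"
    proof (rule ccontr)
      assume "\<not> m * V \<le> 0"
      then show False using key[of "m * V"] by simp
    qed
    moreover have "m * V \<ge> 0" using m_nn V0 by simp
    ultimately show ?thesis by simp
  qed
  have dv: "divfree \<pi>" unfolding divfree_def
  proof
    fix v
    define d where "d = cmod (\<Sum>e\<in>incident v. \<pi> e)"
    show "(\<Sum>e\<in>incident v. \<pi> e) = 0"
    proof (rule ccontr)
      assume "(\<Sum>e\<in>incident v. \<pi> e) \<noteq> 0"
      then have dp: "d > 0" unfolding d_def by simp
      define \<epsilon> where "\<epsilon> = Phi * (d / 6)\<^sup>2"
      have ep: "\<epsilon> > 0" unfolding \<epsilon>_def using dp Phi_pos by simp
      have "sqrt (\<epsilon> / Phi) = d / 6" unfolding \<epsilon>_def using Phi_pos dp by simp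
      moreover have "d \<le> 3 * sqrt (\<epsilon> / Phi)" using key[OF ep] unfolding d_def by blast
      ultimately have "d \<le> 3 * (d / 6)" by simp
      then show False using dp by simp
    qed
  qed
  define y where "y = Sst \<pi>"
  have ye: "y \<in> A0_eig a kinv m lam" unfolding y_def by (rule Sst_eig[OF dv l2])
  have "hnormsq m (sdiff x y) = infsum R UNIV + m * V"
    unfolding hnormsq_def fst_sdiff snd_sdiff y_def Sst_def R_def V_def by simp
  then have "hnormsq m (sdiff x y) = 0" using iR mV by simp
  then show ?thesis using ye by blast
qed

end

lemma sum_fun_apply': "(sum f S) x = (\<Sum>i\<in>S. f i x)"
proof (cases "finite S")
  case True then show ?thesis by (induct S rule: finite_induct) auto
next
  case False then show ?thesis by simp
qed

definition fscale :: "complex \<Rightarrow> (edge \<Rightarrow> complex) \<Rightarrow> (edge \<Rightarrow> complex)" where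
  "fscale c f = (\<lambda>x. c * f x)"

interpretation FV: vector_space fscale
  by unfold_locales (auto simp: fscale_def algebra_simps fun_eq_iff)

definition hh :: "nat \<Rightarrow> int \<times> int" where "hh n = (0, 2 * int n)"
definition en :: "nat \<Rightarrow> edge" where "en n = (0, 2 * int n, D0)"
definition chn :: "nat \<Rightarrow> edge \<Rightarrow> complex" where "chn n = curl (ind (hh n))"

lemma chn_en: "chn n' (en n) = (if n' = n then 1 else 0)"
  by (auto simp: chn_def curl_def ind_def hh_def en_def)

lemma inj_chn: "inj chn"
proof (rule injI)
  fix n n' assume "chn n = chn n'"
  then have "chn n (en n) = chn n' (en n)" by simp
  then show "n = n'" unfolding chn_en by (auto split: if_splits)
qed

lemma sum_l2:
  assumes "finite B" "\<And>b. b \<in> B \<Longrightarrow> (\<lambda>e. (cmod (z b e))\<^sup>2) summable_on UNIV"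
  shows "(\<lambda>e. (cmod (\<Sum>b\<in>B. z b e))\<^sup>2) summable_on UNIV"
  using assms
proof (induct B rule: finite_induct)
  case empty then show ?case by simp
next
  case (insert x F)
  have s1: "(\<lambda>e. (cmod (z x e))\<^sup>2) summable_on UNIV" using insert by simp
  have s2: "(\<lambda>e. (cmod (\<Sum>b\<in>F. z b e))\<^sup>2) summable_on UNIV" using insert by simp
  have "(\<lambda>e. (cmod (z x e + (\<Sum>b\<in>F. z b e)))\<^sup>2) summable_on UNIV"
  proof (rule summable_on_comparison_test)
    show "(\<lambda>e. 2 * (cmod (z x e))\<^sup>2 + 2 * (cmod (\<Sum>b\<in>F. z b e))\<^sup>2) summable_on UNIV"
      by (intro summable_on_add summable_on_cmult_right s1 s2)
    show "(cmod (z x e + (\<Sum>b\<in>F. z b e)))\<^sup>2 \<le> 2 * (cmod (z x e))\<^sup>2 + 2 * (cmod (\<Sum>b\<in>F. z b e))\<^sup>2" for e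
      using cmod_diff_sq[of "z x e" "- (\<Sum>b\<in>F. z b e)"] by simp
  qed simp
  then show ?case using insert by simp
qed

context ES begin

lemma loop_eig: "loop_states a kinv m lam \<subseteq> A0_eig a kinv m lam"
  unfolding loop_states_def by blast

lemma inf_mult: "inf_mult_eigenvalue a kinv m lam"
  unfolding inf_mult_eigenvalue_def
proof
  assume "\<exists>B. finite B \<and> B \<subseteq> A0_eig a kinv m lam \<and>
           (\<forall>x\<in>A0_eig a kinv m lam. \<exists>c. hnormsq m (sdiff x (lincomb B c)) = 0)"
  then obtain B where B: "finite B" "B \<subseteq> A0_eig a kinv m lam"
    and sp: "\<And>x. x \<in> A0_eig a kinv m lam \<Longrightarrow> \<exists>c. hnormsq m (sdiff x (lincomb B c)) = 0" by blast
  have stb: "(\<forall>v. snd b v = 0) \<and> divfree (Bc b) \<and>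
    (\<forall>e. \<forall>t\<in>{0..1}. fst b e t = Bc b e * of_real (phi t) \<and> deriv01 (fst b e) t = Bc b e * of_real (dphi t)) \<and>
    (\<lambda>e. (cmod (Bc b e))\<^sup>2) summable_on UNIV" if "b \<in> B" for b
    using eig_structure that B(2) by blast
  have inspan: "chn n = (\<lambda>e. \<Sum>b\<in>B. c b * Bc b e)" if "hnormsq m (sdiff (Lst (hh n)) (lincomb B c)) = 0" for n c
  proof -
    define chh where "chh = chn n"
    define \<gamma> where "\<gamma> e = (\<Sum>b\<in>B. c b * Bc b e)" for e
    have fL: "fst (lincomb B c) e t = \<gamma> e * of_real (phi t)" if "t \<in> {0..1}" for e t
    proof -
      have "fst (lincomb B c) e t = (\<Sum>b\<in>B. c b * fst b e t)" by (simp add: lincomb_def)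
      also have "\<dots> = (\<Sum>b\<in>B. c b * Bc b e * of_real (phi t))"
      proof (rule sum.cong)
        fix b assume "b \<in> B"
        then have "fst b e t = Bc b e * of_real (phi t)" using stb that by blast
        then show "c b * fst b e t = c b * Bc b e * of_real (phi t)" by simp
      qed simp
      finally show ?thesis unfolding \<gamma>_def by (simp add: sum_distrib_right)
    qed
    have sL: "snd (lincomb B c) v = 0" for v
    proof -
      have "\<And>b. b \<in> B \<Longrightarrow> snd b v = 0" using stb by blast
      then show ?thesis by (simp add: lincomb_def)
    qed
    have T: "integral {0..1} (\<lambda>t. (cmod (fst (sdiff (Lst (hh n)) (lincomb B c)) e t))\<^sup>2) = (cmod (chh e - \<gamma> e))\<^sup>2 * Phi" for e
    proof -
      have "integral {0..1} (\<lambda>t. (cmod (fst (sdiff (Lst (hh n)) (lincomb B c)) e t))\<^sup>2) =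
          integral {0..1} (\<lambda>t. (cmod (chh e - \<gamma> e))\<^sup>2 * (phi t)\<^sup>2)"
        by (rule Henstock_Kurzweil_Integration.integral_cong)
           (simp add: fst_sdiff fL Lst_def Sst_def chh_def chn_def left_diff_distrib[symmetric] norm_mult power_mult_distrib)
      also have "\<dots> = (cmod (chh e - \<gamma> e))\<^sup>2 * Phi"
        unfolding Phi_def using integral_mult[OF phi_int] by simp
      finally show ?thesis .
    qed
    have "hnormsq m (sdiff (Lst (hh n)) (lincomb B c)) = infsum (\<lambda>e. (cmod (chh e - \<gamma> e))\<^sup>2 * Phi) UNIV"
      unfolding hnormsq_def T snd_sdiff sL by (simp add: Lst_def Sst_def)
    also have "\<dots> = infsum (\<lambda>e. (cmod (chh e - \<gamma> e))\<^sup>2) UNIV * Phi" by (rule infsum_cmult_left')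
    finally have z: "infsum (\<lambda>e. (cmod (chh e - \<gamma> e))\<^sup>2) UNIV = 0" using that Phi_pos by simp
    have fs: "finite {e. chh e \<noteq> 0}"
      unfolding chh_def chn_def by (rule finite_subset[OF _ finite_hexagon[of "hh n"]]) (use curl_ind_supp in blast)
    have sg: "(\<lambda>e. (cmod (\<gamma> e))\<^sup>2) summable_on UNIV"
      unfolding \<gamma>_def by (rule sum_l2[OF B(1)]) (use stb in \<open>auto intro: summable_on_cmult_right simp: norm_mult power_mult_distrib\<close>)
    have sd: "(\<lambda>e. (cmod (chh e - \<gamma> e))\<^sup>2) summable_on UNIV"
    proof (rule summable_on_comparison_test)
      show "(\<lambda>e. 2 * (cmod (chh e))\<^sup>2 + 2 * (cmod (\<gamma> e))\<^sup>2) summable_on UNIV"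
        by (intro summable_on_add summable_on_cmult_right sg fin_supp_summable fs)
    qed (use cmod_diff_sq in auto)
    have "(cmod (chh e - \<gamma> e))\<^sup>2 = 0" for e
      using nonneg_infsum_le_0D[OF _ sd, of e] z by simp
    then show ?thesis unfolding chh_def \<gamma>_def by (auto simp: fun_eq_iff)
  qed
  define N where "N = card B"
  define S where "S = chn ` {..N}"
  define T where "T = Bc ` B"
  have fT: "finite T" unfolding T_def using B(1) by simp
  have cT: "card T \<le> N" unfolding T_def N_def by (rule card_image_le[OF B(1)])
  have cS: "card S = N + 1" unfolding S_def using inj_chn
    by (simp add: card_image inj_on_def inj_def)
  have sub: "S \<subseteq> FV.span T"
  proof
    fix x assume "x \<in> S"
    then obtain n where x: "x = chn n" unfolding S_def by blast
    have "Lst (hh n) \<in> A0_eig a kinv m lam" using Lst_loop loop_eig by blast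
    then obtain c where "hnormsq m (sdiff (Lst (hh n)) (lincomb B c)) = 0" using sp by blast
    then have "x = (\<lambda>e. \<Sum>b\<in>B. c b * Bc b e)" unfolding x by (rule inspan)
    also have "\<dots> = (\<Sum>b\<in>B. fscale (c b) (Bc b))" by (simp add: fun_eq_iff sum_fun_apply' fscale_def)
    also have "\<dots> \<in> FV.span T"
      by (intro FV.span_sum FV.span_scale FV.span_base) (auto simp: T_def)
    finally show "x \<in> FV.span T" .
  qed
  have fS: "finite S" unfolding S_def by simp
  have ind: "FV.independent S"
  proof (rule FV.independent_if_scalars_zero)
    show "finite S" by (rule fS)
  next
    fix f x assume z: "(\<Sum>x\<in>S. fscale (f x) x) = 0" and xS: "x \<in> S"
    then obtain n where x: "x = chn n" unfolding S_def by blast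
    have "0 = (\<Sum>y\<in>S. fscale (f y) y) (en n)" using z by simp
    also have "\<dots> = (\<Sum>y\<in>S. f y * y (en n))" by (simp add: sum_fun_apply' fscale_def)
    also have "\<dots> = (\<Sum>y\<in>S. if y = x then f y else 0)"
    proof (rule sum.cong)
      fix y assume "y \<in> S"
      then obtain n' where y: "y = chn n'" unfolding S_def by blast
      have "y = x \<longleftrightarrow> n' = n" unfolding x y using inj_chn by (auto simp: inj_def)
      then show "f y * y (en n) = (if y = x then f y else 0)" unfolding y by (auto simp: chn_en)
    qed simp
    also have "\<dots> = f x" using xS fS by (simp add: sum.delta')
    finally show "f x = 0" by simp
  qed
  have "card S \<le> card T" using FV.independent_span_bound[OF fT ind sub] by simp
  with cS cT show False by simp
qed

end

theorem mainTheorem6: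
  fixes a kinv m lam :: real
  assumes "a > 0" and "kinv \<ge> 0" and "m \<ge> 0"
    and "(1 - (a * kinv)\<^sup>2 * (lam / a)) * sincE (lam / a) + 2 * (a * kinv) * cosE (lam / a) = 0"
  shows "inf_mult_eigenvalue a kinv m lam \<and>
         (\<forall>x. in_H x \<longrightarrow>
            (in_cspan m (loop_states a kinv m lam) x \<longleftrightarrow>
             (\<exists>y\<in>A0_eig a kinv m lam. hnormsq m (sdiff x y) = 0)))"
proof -
  interpret ES a kinv m lam by unfold_locales (rule assms)+
  show ?thesis using inf_mult back_dir fwd_dir by blast
qed

end
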